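(* Let $M$ be a closed topological disc, immersed in $\mathbb{R}^3$ as a capillary surface with support surface $S$ and with real-analytic boundary. Let $\gamma$ denote the boundary curve of $M$. Then $M$ is totally umbilic if and only if $\gamma$ has constant geodesic torsion in the support surface $S$. In this case, the geodesic torsion of $\gamma$ in $S$ is zero.
   Context: A capillary surface is an immersed surface $M$ of constant mean curvature whose boundary curve $\gamma$ lies in another surface $S$ (the support surface), such that $M$ and $S$ intersect with constant contact angle along $\gamma$ (the angle between the unit normals of $M$ and $S$ is constant along $\gamma$). Here $M$ is the image of the closed unit disc under a conformal constant mean curvature immersion defined on an open neighbourhood of the closed disc, with regular boundary curve. Totally umbilic means every point is umbilic (part of a round sphere or a plane). For a surface $\Sigma$ containing $\gamma$ with unit normal $N$ along $\gamma$, $\gamma$ parametrized by arc length and $Y=N\times\gamma'$, the geodesic torsion of $\gamma$ in $\Sigma$ is $\tau_g=\langle Y',N\rangle$. *)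

theory Defs
  imports "HOL-Analysis.Analysis"
begin

text \<open>Parameter domains are subsets of the complex plane (identified with R^2, u + i v).
  Directional derivative of f at z in direction v.\<close>
definition pd :: "complex \<Rightarrow> (complex \<Rightarrow> 'a::real_normed_vector) \<Rightarrow> complex \<Rightarrow> 'a" where
  "pd v f z = frechet_derivative f (at z) v"

fun iter_pd :: "complex list \<Rightarrow> (complex \<Rightarrow> 'a::real_normed_vector) \<Rightarrow> complex \<Rightarrow> 'a" where
  "iter_pd [] f = f"
| "iter_pd (v # vs) f = pd v (iter_pd vs f)"

definition cinf_on :: "complex set \<Rightarrow> (complex \<Rightarrow> 'a::real_normed_vector) \<Rightarrow> bool" where
  "cinf_on U f \<longleftrightarrow> (\<forall>vs. \<forall>z\<in>U. iter_pd vs f differentiable (at z))"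

definition immersion_on :: "complex set \<Rightarrow> (complex \<Rightarrow> real^3) \<Rightarrow> bool" where
  "immersion_on U X \<longleftrightarrow> open U \<and> cinf_on U X \<and>
     (\<forall>z\<in>U. cross3 (pd 1 X z) (pd \<i> X z) \<noteq> 0)"

definition conformal_immersion_on :: "complex set \<Rightarrow> (complex \<Rightarrow> real^3) \<Rightarrow> bool" where
  "conformal_immersion_on U X \<longleftrightarrow> immersion_on U X \<and>
     (\<forall>z\<in>U. inner (pd 1 X z) (pd 1 X z) = inner (pd \<i> X z) (pd \<i> X z) \<and>
            inner (pd 1 X z) (pd \<i> X z) = 0)"

definition unit_normal :: "(complex \<Rightarrow> real^3) \<Rightarrow> complex \<Rightarrow> real^3" where
  "unit_normal X z = (let n = cross3 (pd 1 X z) (pd \<i> X z) in (1 / norm n) *\<^sub>R n)"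

definition fE :: "(complex \<Rightarrow> real^3) \<Rightarrow> complex \<Rightarrow> real" where
  "fE X z = inner (pd 1 X z) (pd 1 X z)"
definition fF :: "(complex \<Rightarrow> real^3) \<Rightarrow> complex \<Rightarrow> real" where
  "fF X z = inner (pd 1 X z) (pd \<i> X z)"
definition fG :: "(complex \<Rightarrow> real^3) \<Rightarrow> complex \<Rightarrow> real" where
  "fG X z = inner (pd \<i> X z) (pd \<i> X z)"
definition sL :: "(complex \<Rightarrow> real^3) \<Rightarrow> complex \<Rightarrow> real" where
  "sL X z = inner (pd 1 (pd 1 X) z) (unit_normal X z)"
definition sM :: "(complex \<Rightarrow> real^3) \<Rightarrow> complex \<Rightarrow> real" where
  "sM X z = inner (pd \<i> (pd 1 X) z) (unit_normal X z)"
definition sN :: "(complex \<Rightarrow> real^3) \<Rightarrow> complex \<Rightarrow> real" where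
  "sN X z = inner (pd \<i> (pd \<i> X) z) (unit_normal X z)"

definition mean_curv :: "(complex \<Rightarrow> real^3) \<Rightarrow> complex \<Rightarrow> real" where
  "mean_curv X z = (fE X z * sN X z - 2 * fF X z * sM X z + fG X z * sL X z)
                   / (2 * (fE X z * fG X z - (fF X z)\<^sup>2))"

definition umbilic :: "(complex \<Rightarrow> real^3) \<Rightarrow> complex \<Rightarrow> bool" where
  "umbilic X z \<longleftrightarrow> (\<exists>k. sL X z = k * fE X z \<and> sM X z = k * fF X z \<and> sN X z = k * fG X z)"

definition real_analytic_on :: "real set \<Rightarrow> (real \<Rightarrow> 'a::real_normed_vector) \<Rightarrow> bool" where
  "real_analytic_on A f \<longleftrightarrow>
     (\<forall>t0\<in>A. \<exists>r>0. \<exists>a::nat \<Rightarrow> 'a. \<forall>t. \<bar>t - t0\<bar> < r \<longrightarrow> (\<lambda>n. (t - t0) ^ n *\<^sub>R a n) sums f t)"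

text \<open>Geodesic torsion of the curve g (arbitrary regular parametrisation) in a surface with
  unit normal N(t) along g: with s arc length, T = dg/ds, Y = N x T, tau_g = <dY/ds, N>.\<close>
definition geodesic_torsion :: "(real \<Rightarrow> real^3) \<Rightarrow> (real \<Rightarrow> real^3) \<Rightarrow> real \<Rightarrow> real" where
  "geodesic_torsion g N t =
     inner (vector_derivative
              (\<lambda>s. cross3 (N s) ((1 / norm (vector_derivative g (at s))) *\<^sub>R vector_derivative g (at s)))
              (at t))
           (N t) / norm (vector_derivative g (at t))"

end

theory Submission
  imports Defs "HOL-Complex_Analysis.Complex_Analysis"
begin


lemma pd_has: "f differentiable (at z) \<Longrightarrow> (f has_derivative (\<lambda>h. pd h f z)) (at z)"
  unfolding pd_def by (simp add: frechet_derivative_works[symmetric])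

lemma pd_eqI: "(f has_derivative f') (at z) \<Longrightarrow> pd h f z = f' h"
  unfolding pd_def by (metis frechet_derivative_at)

lemma pd_cong_open:
  assumes "open U" "z \<in> U" "\<And>x. x \<in> U \<Longrightarrow> f x = g x"
  shows "pd h f z = pd h g z"
proof -
  have "\<And>D. (f has_derivative D) (at z) \<longleftrightarrow> (g has_derivative D) (at z)"
    using assms by (metis has_derivative_transform_within_open)
  then have "frechet_derivative f (at z) = frechet_derivative g (at z)"
    unfolding frechet_derivative_def by simp
  then show ?thesis unfolding pd_def by simp
qed

lemma pd_const_open:
  assumes "open U" "z \<in> U" "\<And>x. x \<in> U \<Longrightarrow> f x = c"
  shows "pd h f z = 0"
proof -
  have "pd h f z = pd h (\<lambda>_. c) z" using pd_cong_open[OF assms(1,2), of f "\<lambda>_. c"] assms(3) by blast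
  also have "\<dots> = 0" by (rule pd_eqI) (rule has_derivative_const)
  finally show ?thesis .
qed

lemma pd_dir:
  assumes "f differentiable (at z)"
  shows "pd w f z = Re w *\<^sub>R pd 1 f z + Im w *\<^sub>R pd \<i> f z"
proof -
  have l: "linear (frechet_derivative f (at z))" using assms by (rule linear_frechet_derivative)
  have w: "w = Re w *\<^sub>R 1 + Im w *\<^sub>R \<i>" by (simp add: complex_eq_iff)
  show ?thesis unfolding pd_def
    by (subst w) (simp add: linear_add[OF l] linear_scale[OF l])
qed

lemma iter_pd_append: "iter_pd (vs @ [v]) f = iter_pd vs (pd v f)"
  by (induction vs) auto

lemma cinf_pd: "cinf_on U f \<Longrightarrow> cinf_on U (pd v f)"
  unfolding cinf_on_def by (metis iter_pd_append)

lemma cinf_diff: "cinf_on U f \<Longrightarrow> z \<in> U \<Longrightarrow> f differentiable (at z)"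
  unfolding cinf_on_def by (metis iter_pd.simps(1))

lemma pd_inner:
  assumes "f differentiable (at z)" "g differentiable (at z)"
  shows "pd h (\<lambda>x. inner (f x) (g x)) z = inner (pd h f z) (g z) + inner (f z) (pd h g z)"
  by (rule pd_eqI) (auto intro!: derivative_eq_intros pd_has assms)

lemma pd_add:
  assumes "f differentiable (at z)" "g differentiable (at z)"
  shows "pd h (\<lambda>x. f x + g x) z = pd h f z + pd h g z"
  by (rule pd_eqI) (auto intro!: derivative_eq_intros pd_has assms)

lemma pd_diff:
  assumes "f differentiable (at z)" "g differentiable (at z)"
  shows "pd h (\<lambda>x. f x - g x) z = pd h f z - pd h g z"
  by (rule pd_eqI) (auto intro!: derivative_eq_intros pd_has assms)

lemma pd_mult:
  fixes f g :: "complex \<Rightarrow> real"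
  assumes "f differentiable (at z)" "g differentiable (at z)"
  shows "pd h (\<lambda>x. f x * g x) z = pd h f z * g z + f z * pd h g z"
  by (rule pd_eqI) (auto intro!: derivative_eq_intros pd_has assms)

lemma pd_cmult:
  fixes f :: "complex \<Rightarrow> real"
  assumes "f differentiable (at z)"
  shows "pd h (\<lambda>x. c * f x) z = c * pd h f z"
  by (rule pd_eqI) (auto intro!: derivative_eq_intros pd_has assms)

lemma line1:
  assumes "g differentiable (at (c + of_real s))"
  shows "DERIV (\<lambda>s. g (c + of_real s)) s :> pd 1 g (c + of_real s)"
proof -
  have "((\<lambda>s. g (c + of_real s)) has_derivative (\<lambda>x. pd (of_real x) g (c + of_real s))) (at s)"
  proof -
    have "((\<lambda>s. of_real s :: complex) has_derivative of_real) (at s)"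
      by (rule bounded_linear_imp_has_derivative) (rule bounded_linear_of_real)
    from has_derivative_add[OF has_derivative_const this]
    have d1: "((\<lambda>s. c + of_real s) has_derivative (\<lambda>x. of_real x)) (at s)" by simp
    from has_derivative_compose[OF d1 pd_has[OF assms]] show ?thesis .
  qed
  moreover have "(\<lambda>x. pd (of_real x) g (c + of_real s)) = (\<lambda>x. x * pd 1 g (c + of_real s))"
  proof
    fix x show "pd (of_real x) g (c + of_real s) = x * pd 1 g (c + of_real s)"
      using pd_dir[OF assms, of "of_real x"] by simp
  qed
  ultimately have h: "((\<lambda>s. g (c + of_real s)) has_derivative (\<lambda>x. x * pd 1 g (c + of_real s))) (at s)" by simp
  show ?thesis unfolding has_field_derivative_def using h by (rule has_derivative_eq_rhs) (simp add: fun_eq_iff mult.commute)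
qed

lemma lineI:
  assumes "g differentiable (at (c + \<i> * of_real s))"
  shows "DERIV (\<lambda>s. g (c + \<i> * of_real s)) s :> pd \<i> g (c + \<i> * of_real s)"
proof -
  have "((\<lambda>s. g (c + \<i> * of_real s)) has_derivative (\<lambda>x. pd (\<i> * of_real x) g (c + \<i> * of_real s))) (at s)"
  proof -
    have "((\<lambda>s. \<i> * of_real s :: complex) has_derivative (\<lambda>x. \<i> * of_real x)) (at s)"
      by (rule has_derivative_mult_right, rule bounded_linear_imp_has_derivative, rule bounded_linear_of_real)
    from has_derivative_add[OF has_derivative_const this]
    have d1: "((\<lambda>s. c + \<i> * of_real s) has_derivative (\<lambda>x. \<i> * of_real x)) (at s)" by simp
    from has_derivative_compose[OF d1 pd_has[OF assms]] show ?thesis .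
  qed
  moreover have "(\<lambda>x. pd (\<i> * of_real x) g (c + \<i> * of_real s)) = (\<lambda>x. x * pd \<i> g (c + \<i> * of_real s))"
  proof
    fix x show "pd (\<i> * of_real x) g (c + \<i> * of_real s) = x * pd \<i> g (c + \<i> * of_real s)"
      using pd_dir[OF assms, of "\<i> * of_real x"] by simp
  qed
  ultimately have h: "((\<lambda>s. g (c + \<i> * of_real s)) has_derivative (\<lambda>x. x * pd \<i> g (c + \<i> * of_real s))) (at s)" by simp
  show ?thesis unfolding has_field_derivative_def using h by (rule has_derivative_eq_rhs) (simp add: fun_eq_iff mult.commute)
qed



lemma line1':
  assumes "f differentiable (at (z + of_real s + \<i> * of_real t))"
  shows "DERIV (\<lambda>s. f (z + of_real s + \<i> * of_real t)) s :> pd 1 f (z + of_real s + \<i> * of_real t)"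
proof -
  have e: "\<And>s. z + of_real s + \<i> * of_real t = (z + \<i> * of_real t) + of_real s" by simp
  show ?thesis unfolding e using line1[of f "z + \<i> * of_real t" s] assms unfolding e by simp
qed

lemma lineI':
  assumes "f differentiable (at (z + of_real s + \<i> * of_real t))"
  shows "DERIV (\<lambda>t. f (z + of_real s + \<i> * of_real t)) t :> pd \<i> f (z + of_real s + \<i> * of_real t)"
proof -
  show ?thesis using lineI[of f "z + of_real s" t] assms by simp
qed

lemma schwarz_real:
  fixes g :: "complex \<Rightarrow> real"
  assumes U: "open U" "z \<in> U"
    and dg: "\<And>w. w \<in> U \<Longrightarrow> g differentiable (at w)"
    and d1g: "\<And>w. w \<in> U \<Longrightarrow> pd 1 g differentiable (at w)"
    and dig: "\<And>w. w \<in> U \<Longrightarrow> pd \<i> g differentiable (at w)"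
    and c1: "isCont (pd \<i> (pd 1 g)) z" and c2: "isCont (pd 1 (pd \<i> g)) z"
  shows "pd \<i> (pd 1 g) z = pd 1 (pd \<i> g) z"
proof (rule ccontr)
  define A where "A = pd \<i> (pd 1 g) z"
  define B where "B = pd 1 (pd \<i> g) z"
  assume "\<not> ?thesis"
  then have ne: "A \<noteq> B" by (simp add: A_def B_def)
  define e where "e = \<bar>A - B\<bar> / 3"
  have e: "e > 0" using ne by (simp add: e_def)
  obtain d1 where d1: "d1 > 0" "\<And>w. dist w z < d1 \<Longrightarrow> dist (pd \<i> (pd 1 g) w) A < e"
    using c1 e unfolding continuous_at_eps_delta A_def by blast
  obtain d2 where d2: "d2 > 0" "\<And>w. dist w z < d2 \<Longrightarrow> dist (pd 1 (pd \<i> g) w) B < e"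
    using c2 e unfolding continuous_at_eps_delta B_def by blast
  obtain d3 where d3: "d3 > 0" "ball z d3 \<subseteq> U"
    using U openE by blast
  define r where "r = min d1 (min d2 d3)"
  have r: "r > 0" using d1 d2 d3 by (simp add: r_def)
  define h where "h = r / 3"
  have h: "h > 0" using r by (simp add: h_def)
  define P where "P s t = z + of_real s + \<i> * of_real t" for s t :: real
  have Pdist: "dist (P s t) z < r" if "0 \<le> s" "s \<le> h" "0 \<le> t" "t \<le> h" for s t
  proof -
    have "dist (P s t) z = norm (of_real s + \<i> * of_real t)" by (simp add: P_def dist_norm)
    also have "\<dots> \<le> norm (of_real s :: complex) + norm (\<i> * of_real t)" by (rule norm_triangle_ineq)
    also have "\<dots> = \<bar>s\<bar> + \<bar>t\<bar>" by (simp add: norm_mult)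
    also have "\<dots> < r" using that h_def r by simp
    finally show ?thesis .
  qed
  have PU: "P s t \<in> U" if "0 \<le> s" "s \<le> h" "0 \<le> t" "t \<le> h" for s t
    using Pdist[OF that] d3 unfolding r_def by (auto simp: dist_commute subset_iff)
  have "\<exists>s1. 0 < s1 \<and> s1 < h \<and> (g (P h h) - g (P h 0)) - (g (P 0 h) - g (P 0 0))
          = (h - 0) * (pd 1 g (P s1 h) - pd 1 g (P s1 0))"
  proof (rule MVT2[OF h, of "\<lambda>s. g (P s h) - g (P s 0)"])
    fix s assume "0 \<le> s" "s \<le> h"
    then show "DERIV (\<lambda>s. g (P s h) - g (P s 0)) s :> pd 1 g (P s h) - pd 1 g (P s 0)"
      unfolding P_def using h by (intro DERIV_diff line1' dg PU[unfolded P_def]) auto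
  qed
  then obtain s1 where s1: "0 < s1" "s1 < h"
    "(g (P h h) - g (P h 0)) - (g (P 0 h) - g (P 0 0)) = h * (pd 1 g (P s1 h) - pd 1 g (P s1 0))"
    by auto
  have "\<exists>t1. 0 < t1 \<and> t1 < h \<and> pd 1 g (P s1 h) - pd 1 g (P s1 0) = (h - 0) * pd \<i> (pd 1 g) (P s1 t1)"
  proof (rule MVT2[OF h, of "\<lambda>t. pd 1 g (P s1 t)"])
    fix t assume "0 \<le> t" "t \<le> h"
    then show "DERIV (\<lambda>t. pd 1 g (P s1 t)) t :> pd \<i> (pd 1 g) (P s1 t)"
      unfolding P_def using h s1 by (intro lineI' d1g PU[unfolded P_def]) auto
  qed
  then obtain t1 where t1: "0 < t1" "t1 < h" "pd 1 g (P s1 h) - pd 1 g (P s1 0) = h * pd \<i> (pd 1 g) (P s1 t1)"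
    by auto
  have "\<exists>t2. 0 < t2 \<and> t2 < h \<and> (g (P h h) - g (P 0 h)) - (g (P h 0) - g (P 0 0))
          = (h - 0) * (pd \<i> g (P h t2) - pd \<i> g (P 0 t2))"
  proof (rule MVT2[OF h, of "\<lambda>t. g (P h t) - g (P 0 t)"])
    fix t assume "0 \<le> t" "t \<le> h"
    then show "DERIV (\<lambda>t. g (P h t) - g (P 0 t)) t :> pd \<i> g (P h t) - pd \<i> g (P 0 t)"
      unfolding P_def using h by (intro DERIV_diff lineI' dg PU[unfolded P_def]) auto
  qed
  then obtain t2 where t2: "0 < t2" "t2 < h"
    "(g (P h h) - g (P 0 h)) - (g (P h 0) - g (P 0 0)) = h * (pd \<i> g (P h t2) - pd \<i> g (P 0 t2))"
    by auto
  have "\<exists>s2. 0 < s2 \<and> s2 < h \<and> pd \<i> g (P h t2) - pd \<i> g (P 0 t2) = (h - 0) * pd 1 (pd \<i> g) (P s2 t2)"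
  proof (rule MVT2[OF h, of "\<lambda>s. pd \<i> g (P s t2)"])
    fix s assume "0 \<le> s" "s \<le> h"
    then show "DERIV (\<lambda>s. pd \<i> g (P s t2)) s :> pd 1 (pd \<i> g) (P s t2)"
      unfolding P_def using h t2 by (intro line1' dig PU[unfolded P_def]) auto
  qed
  then obtain s2 where s2: "0 < s2" "s2 < h" "pd \<i> g (P h t2) - pd \<i> g (P 0 t2) = h * pd 1 (pd \<i> g) (P s2 t2)"
    by auto
  have "h * (h * pd \<i> (pd 1 g) (P s1 t1)) = h * (h * pd 1 (pd \<i> g) (P s2 t2))"
    using s1(3) t1(3) t2(3) s2(3) by (simp add: algebra_simps)
  then have eq: "pd \<i> (pd 1 g) (P s1 t1) = pd 1 (pd \<i> g) (P s2 t2)" using h by simp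
  have "dist (pd \<i> (pd 1 g) (P s1 t1)) A < e"
    using d1(2) Pdist[of s1 t1] s1 t1 unfolding r_def by auto
  moreover have "dist (pd 1 (pd \<i> g) (P s2 t2)) B < e"
    using d2(2) Pdist[of s2 t2] s2 t2 unfolding r_def by auto
  ultimately have "\<bar>A - B\<bar> < 2 * e" using eq by (simp add: dist_real_def)
  then show False using e by (simp add: e_def)
qed



lemma has_deriv_comp:
  fixes f :: "complex \<Rightarrow> real^'n"
  shows "(f has_derivative f') (at z) \<Longrightarrow> ((\<lambda>w. f w $ k) has_derivative (\<lambda>h. f' h $ k)) (at z)"
  by (rule bounded_linear.has_derivative[OF bounded_linear_vec_nth])

lemma pd_comp:
  fixes f :: "complex \<Rightarrow> real^'n"
  assumes "f differentiable (at z)"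
  shows "pd h (\<lambda>w. f w $ k) z = pd h f z $ k"
  by (rule pd_eqI) (rule has_deriv_comp[OF pd_has[OF assms]])

lemma diff_comp: fixes f :: "complex \<Rightarrow> real^'n" assumes "f differentiable (at z)" shows "(\<lambda>w. f w $ k) differentiable (at z)"
  using differentiableI[OF has_deriv_comp[OF pd_has[OF assms]]] .

lemma diff_cong_open:
  assumes "open U" "w \<in> U" "\<And>x. x \<in> U \<Longrightarrow> f x = g x" "f differentiable (at w)"
  shows "g differentiable (at w)"
  using assms unfolding differentiable_def by (metis has_derivative_transform_within_open)

lemma schwarz_vec:
  fixes f :: "complex \<Rightarrow> real^'n"
  assumes U: "open U" "z \<in> U" and sm: "cinf_on U f"
  shows "pd \<i> (pd 1 f) z = pd 1 (pd \<i> f) z"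
proof -
  have df: "\<And>w. w \<in> U \<Longrightarrow> f differentiable (at w)" using sm by (rule cinf_diff)
  have d1f: "\<And>w. w \<in> U \<Longrightarrow> pd 1 f differentiable (at w)" using cinf_pd[OF sm] by (rule cinf_diff)
  have dif: "\<And>w. w \<in> U \<Longrightarrow> pd \<i> f differentiable (at w)" using cinf_pd[OF sm] by (rule cinf_diff)
  have d1if: "\<And>w. w \<in> U \<Longrightarrow> pd \<i> (pd 1 f) differentiable (at w)" using cinf_pd[OF cinf_pd[OF sm]] by (rule cinf_diff)
  have di1f: "\<And>w. w \<in> U \<Longrightarrow> pd 1 (pd \<i> f) differentiable (at w)" using cinf_pd[OF cinf_pd[OF sm]] by (rule cinf_diff)
  show ?thesis
  proof (subst vec_eq_iff, intro allI)
    fix k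
    define g where "g w = f w $ k" for w
    have e1: "pd 1 g w = pd 1 f w $ k" if "w \<in> U" for w
      unfolding g_def using pd_comp[OF df[OF that]] .
    have ei: "pd \<i> g w = pd \<i> f w $ k" if "w \<in> U" for w
      unfolding g_def using pd_comp[OF df[OF that]] .
    have e1i: "pd \<i> (pd 1 g) w = pd \<i> (pd 1 f) w $ k" if "w \<in> U" for w
    proof -
      have "pd \<i> (pd 1 g) w = pd \<i> (\<lambda>w. pd 1 f w $ k) w" by (rule pd_cong_open[OF U(1) that]) (rule e1)
      also have "\<dots> = pd \<i> (pd 1 f) w $ k" using pd_comp[OF d1f[OF that]] .
      finally show ?thesis .
    qed
    have ei1: "pd 1 (pd \<i> g) w = pd 1 (pd \<i> f) w $ k" if "w \<in> U" for w
    proof -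
      have "pd 1 (pd \<i> g) w = pd 1 (\<lambda>w. pd \<i> f w $ k) w" by (rule pd_cong_open[OF U(1) that]) (rule ei)
      also have "\<dots> = pd 1 (pd \<i> f) w $ k" using pd_comp[OF dif[OF that]] .
      finally show ?thesis .
    qed
    have ev: "eventually (\<lambda>w. w \<in> U) (nhds z)" using eventually_nhds_in_open[OF U] .
    have "pd \<i> (pd 1 g) z = pd 1 (pd \<i> g) z"
    proof (rule schwarz_real[OF U])
      show "g differentiable (at w)" if "w \<in> U" for w unfolding g_def by (rule diff_comp[OF df[OF that]])
      show "pd 1 g differentiable (at w)" if "w \<in> U" for w
      proof (rule diff_cong_open[OF U(1) that, of "\<lambda>w. pd 1 f w $ k"])
        show "pd 1 f x $ k = pd 1 g x" if "x \<in> U" for x using e1[OF that] by simp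
        show "(\<lambda>w. pd 1 f w $ k) differentiable at w" by (rule diff_comp[OF d1f[OF that]])
      qed
      show "pd \<i> g differentiable (at w)" if "w \<in> U" for w
      proof (rule diff_cong_open[OF U(1) that, of "\<lambda>w. pd \<i> f w $ k"])
        show "pd \<i> f x $ k = pd \<i> g x" if "x \<in> U" for x using ei[OF that] by simp
        show "(\<lambda>w. pd \<i> f w $ k) differentiable at w" by (rule diff_comp[OF dif[OF that]])
      qed
      have c1: "isCont (\<lambda>w. pd \<i> (pd 1 f) w $ k) z"
        by (rule differentiable_imp_continuous_within[OF diff_comp[OF d1if[OF U(2)]]])
      have ev1: "eventually (\<lambda>w. pd \<i> (pd 1 g) w = pd \<i> (pd 1 f) w $ k) (nhds z)"
        by (rule eventually_mono[OF ev]) (rule e1i)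
      show "isCont (pd \<i> (pd 1 g)) z" using isCont_cong[OF ev1] c1 by simp
      have c2: "isCont (\<lambda>w. pd 1 (pd \<i> f) w $ k) z"
        by (rule differentiable_imp_continuous_within[OF diff_comp[OF di1f[OF U(2)]]])
      have ev2: "eventually (\<lambda>w. pd 1 (pd \<i> g) w = pd 1 (pd \<i> f) w $ k) (nhds z)"
        by (rule eventually_mono[OF ev]) (rule ei1)
      show "isCont (pd 1 (pd \<i> g)) z" using isCont_cong[OF ev2] c2 by simp
    qed
    then show "pd \<i> (pd 1 f) z $ k = pd 1 (pd \<i> f) z $ k" using e1i[OF U(2)] ei1[OF U(2)] by simp
  qed
qed



lemma bb_cross: "bounded_bilinear (cross3 :: real^3 \<Rightarrow> real^3 \<Rightarrow> real^3)"
  using bilinear_conv_bounded_bilinear bilinear_cross by blast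

lemma diff_cross:
  fixes f g :: "complex \<Rightarrow> real^3"
  assumes "f differentiable (at z)" "g differentiable (at z)"
  shows "(\<lambda>w. cross3 (f w) (g w)) differentiable (at z)"
  using assms unfolding differentiable_def
  by (blast intro: bounded_bilinear.FDERIV[OF bb_cross])

lemma diff_unit:
  fixes n :: "complex \<Rightarrow> real^3"
  assumes "n differentiable (at z)" "n z \<noteq> 0"
  shows "(\<lambda>w. (1 / norm (n w)) *\<^sub>R n w) differentiable (at z)"
proof -
  have "(\<lambda>w. norm (n w)) differentiable (at z)"
    using differentiable_compose[of norm n z] assms differentiable_norm_at[OF assms(2)] by (simp add: o_def)
  then have "(\<lambda>w. 1 / norm (n w)) differentiable (at z)"
    using assms(2) by (intro differentiable_divide) auto
  then show ?thesis using assms(1) by (rule differentiable_scaleR)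
qed

lemma parseval3:
  fixes a b v w :: "real^3"
  assumes "inner a b = 0"
  shows "(inner a a * inner b b) * inner v w = inner b b * inner v a * inner w a + inner a a * inner v b * inner w b
           + inner v (cross3 a b) * inner w (cross3 a b)"
proof -
  have h: "a$1*b$1 + a$2*b$2 + a$3*b$3 = 0" using assms by (simp add: inner_vec_def sum_3)
  show ?thesis using h unfolding cross3_def inner_vec_def sum_3 by (simp add: vector_def) algebra
qed



lemma pd_inner_const:
  assumes "open U" "z \<in> U" "\<And>w. w \<in> U \<Longrightarrow> inner (f w) (g w) = c"
    "f differentiable (at z)" "g differentiable (at z)"
  shows "inner (pd d f z) (g z) + inner (f z) (pd d g z) = 0"
proof -
  have "pd d (\<lambda>w. inner (f w) (g w)) z = 0" by (rule pd_const_open[OF assms(1,2,3)])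
  then show ?thesis using pd_inner[OF assms(4,5)] by simp
qed

lemma frame:
  fixes xu xv v w :: "real^3"
  assumes o: "inner xu xv = 0" and eq: "inner xv xv = inner xu xu" and nz: "xu \<noteq> 0"
  defines "n \<equiv> (1 / norm (cross3 xu xv)) *\<^sub>R cross3 xu xv"
  shows "norm (cross3 xu xv) = inner xu xu"
    and "inner xu xu * inner v w = inner v xu * inner w xu + inner v xv * inner w xv + inner xu xu * inner v n * inner w n"
    and "inner n n = 1" "inner n xu = 0" "inner n xv = 0"
    and "cross3 n xu = xv" "cross3 n xv = - xu"
proof -
  define E where "E = inner xu xu"
  have E: "E > 0" using nz by (simp add: E_def)
  have "(norm (cross3 xu xv))\<^sup>2 = (norm xu * norm xv)\<^sup>2" using norm_cross_dot[of xu xv] o by simp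
  also have "\<dots> = E * E" using eq by (simp add: E_def power_mult_distrib dot_square_norm[symmetric])
  finally have nc: "norm (cross3 xu xv) = E" using E
    by (metis norm_ge_zero power2_eq_square real_sqrt_abs real_sqrt_mult_self abs_of_pos abs_of_nonneg)
  then show "norm (cross3 xu xv) = inner xu xu" by (simp add: E_def)
  have ncE: "cross3 xu xv = E *\<^sub>R n" using nc E by (simp add: n_def)
  have p: "(E * E) * inner v w = E * inner v xu * inner w xu + E * inner v xv * inner w xv
           + inner v (cross3 xu xv) * inner w (cross3 xu xv)"
    using parseval3[OF o, of v w] eq by (simp add: E_def)
  then have "E * (E * inner v w) = E * (inner v xu * inner w xu + inner v xv * inner w xv + E * inner v n * inner w n)"
    unfolding ncE by (simp add: algebra_simps)
  then show "inner xu xu * inner v w = inner v xu * inner w xu + inner v xv * inner w xv + inner xu xu * inner v n * inner w n"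
    using E by (simp add: E_def)
  show "inner n n = 1" using nc E by (simp add: n_def dot_square_norm)
  show "inner n xu = 0" by (simp add: n_def dot_cross_self)
  show "inner n xv = 0" by (simp add: n_def dot_cross_self)
  have c1: "cross3 (cross3 xu xv) xu = E *\<^sub>R xv" using o eq unfolding E_def
    by (simp add: cross3_simps inner_vec_def sum_3 vec_eq_iff forall_3) algebra
  have c2: "cross3 (cross3 xu xv) xv = - (E *\<^sub>R xu)" using o eq unfolding E_def
    by (simp add: cross3_simps inner_vec_def sum_3 vec_eq_iff forall_3) algebra
  show "cross3 n xu = xv" using c1 E unfolding n_def nc by (simp add: cross_mult_left)
  show "cross3 n xv = - xu" using c2 E unfolding n_def nc by (simp add: cross_mult_left)
qed



lemma conf_basic:
  assumes conf: "conformal_immersion_on U X" and z: "z \<in> U"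
  shows "open U" "cinf_on U X" "inner (pd 1 X z) (pd \<i> X z) = 0"
    "inner (pd \<i> X z) (pd \<i> X z) = inner (pd 1 X z) (pd 1 X z)" "pd 1 X z \<noteq> 0"
    "unit_normal X z = (1 / norm (cross3 (pd 1 X z) (pd \<i> X z))) *\<^sub>R cross3 (pd 1 X z) (pd \<i> X z)"
    "unit_normal X differentiable (at z)"
proof -
  show o: "open U" and sm: "cinf_on U X" using conf by (auto simp: conformal_immersion_on_def immersion_on_def)
  show "inner (pd 1 X z) (pd \<i> X z) = 0" "inner (pd \<i> X z) (pd \<i> X z) = inner (pd 1 X z) (pd 1 X z)"
    using conf z by (auto simp: conformal_immersion_on_def)
  have nz: "cross3 (pd 1 X z) (pd \<i> X z) \<noteq> 0" using conf z by (auto simp: conformal_immersion_on_def immersion_on_def)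
  then show "pd 1 X z \<noteq> 0" by auto
  show "unit_normal X z = (1 / norm (cross3 (pd 1 X z) (pd \<i> X z))) *\<^sub>R cross3 (pd 1 X z) (pd \<i> X z)"
    by (simp add: unit_normal_def Let_def)
  have "unit_normal X = (\<lambda>w. (1 / norm (cross3 (pd 1 X w) (pd \<i> X w))) *\<^sub>R cross3 (pd 1 X w) (pd \<i> X w))"
    by (rule ext) (simp add: unit_normal_def Let_def)
  moreover have "(\<lambda>w. (1 / norm (cross3 (pd 1 X w) (pd \<i> X w))) *\<^sub>R cross3 (pd 1 X w) (pd \<i> X w)) differentiable (at z)"
    by (rule diff_unit[where n="\<lambda>w. cross3 (pd 1 X w) (pd \<i> X w)", OF diff_cross])
       (auto intro!: cinf_diff[OF cinf_pd[OF sm] z] nz)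
  ultimately show "unit_normal X differentiable (at z)" by simp
qed



lemma hopf_CR:
  assumes conf: "conformal_immersion_on U X" and H: "\<forall>w\<in>U. mean_curv X w = H" and z: "z \<in> U"
  shows "pd \<i> (sL X) z - pd \<i> (sN X) z = 2 * pd 1 (sM X) z"
    and "-2 * pd \<i> (sM X) z = pd 1 (sL X) z - pd 1 (sN X) z"
proof -
  have o: "open U" and sm: "cinf_on U X" using conf_basic[OF conf z] by auto
  define Xu where "Xu = pd 1 X"
  define Xv where "Xv = pd \<i> X"
  define N where "N = unit_normal X"
  have smu: "cinf_on U Xu" "cinf_on U Xv" using cinf_pd[OF sm] by (auto simp: Xu_def Xv_def)
  have dXu: "Xu differentiable (at w)" "Xv differentiable (at w)" if "w \<in> U" for w
    using cinf_diff[OF smu(1) that] cinf_diff[OF smu(2) that] by auto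
  have dXX: "pd d Xu differentiable (at w)" "pd d Xv differentiable (at w)" if "w \<in> U" for d w
    using cinf_diff[OF cinf_pd[OF smu(1)] that] cinf_diff[OF cinf_pd[OF smu(2)] that] by auto
  have dN: "N differentiable (at w)" if "w \<in> U" for w using conf_basic(7)[OF conf that] by (simp add: N_def)
  have ortho: "inner (Xu w) (Xv w) = 0" "inner (Xv w) (Xv w) = inner (Xu w) (Xu w)" "Xu w \<noteq> 0" if "w \<in> U" for w
    using conf_basic[OF conf that] by (auto simp: Xu_def Xv_def)
  have Nw: "N w = (1 / norm (cross3 (Xu w) (Xv w))) *\<^sub>R cross3 (Xu w) (Xv w)" if "w \<in> U" for w
    using conf_basic(6)[OF conf that] by (simp add: N_def Xu_def Xv_def)
  have fr: "inner (N w) (N w) = 1" "inner (N w) (Xu w) = 0" "inner (N w) (Xv w) = 0" if "w \<in> U" for w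
    using frame(3,4,5)[OF ortho[OF that]] Nw[OF that] by auto
  have EE: "fE X = (\<lambda>w. inner (Xu w) (Xu w))" by (rule ext) (simp add: fE_def Xu_def)
  have LL: "sL X = (\<lambda>w. inner (pd 1 Xu w) (N w))" by (rule ext) (simp add: sL_def Xu_def N_def)
  have MM: "sM X = (\<lambda>w. inner (pd \<i> Xu w) (N w))" by (rule ext) (simp add: sM_def Xu_def N_def)
  have NN: "sN X = (\<lambda>w. inner (pd \<i> Xv w) (N w))" by (rule ext) (simp add: sN_def Xv_def N_def)
  have dL: "sL X differentiable (at w)" "sM X differentiable (at w)" "sN X differentiable (at w)"
    "fE X differentiable (at w)" if "w \<in> U" for w
    unfolding LL MM NN EE using dXX[OF that] dN[OF that] dXu[OF that] by auto
  have mean: "sL X w + sN X w = 2 * H * fE X w" if "w \<in> U" for w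
  proof -
    have E: "fE X w > 0" using ortho(3)[OF that] by (simp add: fE_def Xu_def)
    have "mean_curv X w = H" using H that by auto
    moreover have "fF X w = 0" "fG X w = fE X w" using ortho[OF that] by (auto simp: fF_def fG_def fE_def Xu_def Xv_def)
    ultimately have "(fE X w * sN X w + fE X w * sL X w) / (2 * (fE X w * fE X w)) = H"
      by (simp add: mean_curv_def)
    then have "fE X w * (sN X w + sL X w) = fE X w * (2 * H * fE X w)"
      using E by (simp add: field_simps)
    then show ?thesis using E by simp
  qed
  have F1: "inner (pd d Xu z) (Xv z) + inner (Xu z) (pd d Xv z) = 0" for d
    by (rule pd_inner_const[OF o z ortho(1)]) (auto intro: dXu z)
  have F2a: "pd d (fE X) z = 2 * inner (pd d Xu z) (Xu z)" for d
    unfolding EE using pd_inner[OF dXu(1)[OF z] dXu(1)[OF z], of d] by (simp add: inner_commute)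
  have F2b: "pd d (fE X) z = 2 * inner (pd d Xv z) (Xv z)" for d
  proof -
    have "pd d (fE X) z = pd d (\<lambda>w. inner (Xv w) (Xv w)) z"
      by (rule pd_cong_open[OF o z]) (simp add: EE ortho(2))
    then show ?thesis using pd_inner[OF dXu(2)[OF z] dXu(2)[OF z], of d] by (simp add: inner_commute)
  qed
  have F3: "inner (pd d N z) (N z) = 0" for d
    using pd_inner_const[OF o z fr(1) dN[OF z] dN[OF z], of d] by (simp add: inner_commute)
  have F4: "inner (pd d N z) (Xu z) + inner (N z) (pd d Xu z) = 0" for d
    by (rule pd_inner_const[OF o z fr(2)]) (auto intro: dXu dN z)
  have F5: "inner (pd d N z) (Xv z) + inner (N z) (pd d Xv z) = 0" for d
    by (rule pd_inner_const[OF o z fr(3)]) (auto intro: dXu dN z)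
  have F6: "pd d (sL X) z + pd d (sN X) z = 2 * H * pd d (fE X) z" for d
  proof -
    have "pd d (\<lambda>w. sL X w + sN X w) z = pd d (\<lambda>w. 2 * H * fE X w) z"
      by (rule pd_cong_open[OF o z]) (rule mean)
    then show ?thesis using pd_add[OF dL(1)[OF z] dL(3)[OF z], of d] pd_cmult[OF dL(4)[OF z], of d "2 * H"] by simp
  qed
  have F7: "pd d (sL X) z = inner (pd d (pd 1 Xu) z) (N z) + inner (pd 1 Xu z) (pd d N z)" for d
    unfolding LL by (rule pd_inner) (auto intro: dXX dN z)
  have F8: "pd d (sM X) z = inner (pd d (pd \<i> Xu) z) (N z) + inner (pd \<i> Xu z) (pd d N z)" for d
    unfolding MM by (rule pd_inner) (auto intro: dXX dN z)
  have F9: "pd d (sN X) z = inner (pd d (pd \<i> Xv) z) (N z) + inner (pd \<i> Xv z) (pd d N z)" for d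
    unfolding NN by (rule pd_inner) (auto intro: dXX dN z)
  have S1w: "pd \<i> Xu w = pd 1 Xv w" if "w \<in> U" for w
    using schwarz_vec[OF o that sm] by (simp add: Xu_def Xv_def)
  have S1: "pd \<i> Xu z = pd 1 Xv z" by (rule S1w[OF z])
  have S2: "pd \<i> (pd 1 Xu) z = pd 1 (pd \<i> Xu) z" by (rule schwarz_vec[OF o z smu(1)])
  have S3: "pd \<i> (pd \<i> Xu) z = pd 1 (pd \<i> Xv) z"
  proof -
    have "pd \<i> (pd \<i> Xu) z = pd \<i> (pd 1 Xv) z" by (rule pd_cong_open[OF o z]) (rule S1w)
    also have "\<dots> = pd 1 (pd \<i> Xv) z" by (rule schwarz_vec[OF o z smu(2)])
    finally show ?thesis .
  qed
  have P: "inner (Xu z) (Xu z) * inner v w = inner v (Xu z) * inner w (Xu z) + inner v (Xv z) * inner w (Xv z)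
      + inner (Xu z) (Xu z) * inner v (N z) * inner w (N z)" for v w
    using frame(2)[OF ortho[OF z], of v w] Nw[OF z] by simp
  define E Eu Ev L M Nn where "E = inner (Xu z) (Xu z)" and "Eu = pd 1 (fE X) z" and "Ev = pd \<i> (fE X) z"
    and "L = inner (pd 1 Xu z) (N z)" and "M = inner (pd \<i> Xu z) (N z)" and "Nn = inner (pd \<i> Xv z) (N z)"
  have A1: "2 * inner (pd 1 Xu z) (Xu z) = Eu" using F2a[of 1] by (simp add: Eu_def)
  have A2: "2 * inner (pd \<i> Xu z) (Xu z) = Ev" using F2a[of \<i>] by (simp add: Ev_def)
  have A3: "2 * inner (pd \<i> Xu z) (Xv z) = Eu" using F2b[of 1] S1 by (simp add: Eu_def)
  have A4: "2 * inner (pd \<i> Xv z) (Xv z) = Ev" using F2b[of \<i>] by (simp add: Ev_def)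
  have A5: "2 * inner (pd 1 Xu z) (Xv z) = - Ev" using F1[of 1] S1 A2 by (simp add: inner_commute)
  have A6: "2 * inner (pd \<i> Xv z) (Xu z) = - Eu" using F1[of \<i>] A3 by (simp add: inner_commute)
  have A7: "inner (pd 1 N z) (Xu z) = - L" using F4[of 1] by (simp add: L_def inner_commute)
  have A8: "inner (pd \<i> N z) (Xu z) = - M" using F4[of \<i>] by (simp add: M_def inner_commute)
  have A9: "inner (pd 1 N z) (Xv z) = - M" using F5[of 1] S1 by (simp add: M_def inner_commute)
  have A10: "inner (pd \<i> N z) (Xv z) = - Nn" using F5[of \<i>] by (simp add: Nn_def inner_commute)
  have A11: "inner (pd 1 N z) (N z) = 0" "inner (pd \<i> N z) (N z) = 0" using F3 by auto
  have Ez: "E > 0" using ortho(3)[OF z] by (simp add: E_def)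
  have meanz: "L + Nn = 2 * H * E" using mean[OF z] by (simp add: L_def Nn_def E_def LL NN EE)
  have P1: "E * inner (pd 1 Xu z) (pd \<i> N z) = inner (pd 1 Xu z) (Xu z) * (- M) + inner (pd 1 Xu z) (Xv z) * (- Nn)"
    using P[of "pd 1 Xu z" "pd \<i> N z"] A8 A10 A11 by (simp add: E_def)
  have P2: "E * inner (pd \<i> Xu z) (pd 1 N z) = inner (pd \<i> Xu z) (Xu z) * (- L) + inner (pd \<i> Xu z) (Xv z) * (- M)"
    using P[of "pd \<i> Xu z" "pd 1 N z"] A7 A9 A11 by (simp add: E_def)
  have P3: "E * inner (pd \<i> Xu z) (pd \<i> N z) = inner (pd \<i> Xu z) (Xu z) * (- M) + inner (pd \<i> Xu z) (Xv z) * (- Nn)"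
    using P[of "pd \<i> Xu z" "pd \<i> N z"] A8 A10 A11 by (simp add: E_def)
  have P4: "E * inner (pd \<i> Xv z) (pd 1 N z) = inner (pd \<i> Xv z) (Xu z) * (- L) + inner (pd \<i> Xv z) (Xv z) * (- M)"
    using P[of "pd \<i> Xv z" "pd 1 N z"] A7 A9 A11 by (simp add: E_def)
  have C1: "E * (pd \<i> (sL X) z - pd 1 (sM X) z) = E * (H * Ev)"
  proof -
    have "pd \<i> (sL X) z - pd 1 (sM X) z = inner (pd 1 Xu z) (pd \<i> N z) - inner (pd \<i> Xu z) (pd 1 N z)"
      using F7[of \<i>] F8[of 1] S2 by simp
    note d = this
    have "E * (pd \<i> (sL X) z - pd 1 (sM X) z) = E * inner (pd 1 Xu z) (pd \<i> N z) - E * inner (pd \<i> Xu z) (pd 1 N z)"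
      unfolding d by (rule right_diff_distrib)
    also have "\<dots> = Ev * (L + Nn) / 2" using P1 P2 A1 A2 A3 A5 by (simp add: field_simps) algebra
    also have "\<dots> = E * (H * Ev)" using meanz by simp
    finally show ?thesis .
  qed
  have C2: "E * (pd \<i> (sM X) z - pd 1 (sN X) z) = E * (- H * Eu)"
  proof -
    have "pd \<i> (sM X) z - pd 1 (sN X) z = inner (pd \<i> Xu z) (pd \<i> N z) - inner (pd \<i> Xv z) (pd 1 N z)"
      using F8[of \<i>] F9[of 1] S3 by simp
    note d = this
    have "E * (pd \<i> (sM X) z - pd 1 (sN X) z) = E * inner (pd \<i> Xu z) (pd \<i> N z) - E * inner (pd \<i> Xv z) (pd 1 N z)"
      unfolding d by (rule right_diff_distrib)
    also have "\<dots> = - Eu * (L + Nn) / 2" using P3 P4 A2 A3 A4 A6 by (simp add: field_simps) algebra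
    also have "\<dots> = E * (- H * Eu)" using meanz by simp
    finally show ?thesis .
  qed
  have C1': "pd \<i> (sL X) z - pd 1 (sM X) z = H * Ev" using C1 Ez by simp
  have C2': "pd \<i> (sM X) z - pd 1 (sN X) z = - H * Eu"
    using C2 Ez by (metis mult_cancel_left less_irrefl)
  show "pd \<i> (sL X) z - pd \<i> (sN X) z = 2 * pd 1 (sM X) z"
    using C1' F6[of \<i>] by (simp add: Ev_def)
  show "-2 * pd \<i> (sM X) z = pd 1 (sL X) z - pd 1 (sN X) z"
    using C2' F6[of 1] by (simp add: Eu_def)
qed



lemma CR_field:
  fixes f :: "complex \<Rightarrow> complex"
  assumes d: "(f has_derivative D) (at z)" and cr0: "D \<i> = \<i> * c" and c: "D 1 = c"
  shows "(f has_field_derivative c) (at z)"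
proof -
  have l: "linear D" using has_derivative_bounded_linear[OF d] bounded_linear.linear by blast
  have "D h = c * h" for h
  proof -
    have w: "h = Re h *\<^sub>R 1 + Im h *\<^sub>R \<i>" by (simp add: complex_eq_iff)
    have "D h = Re h *\<^sub>R D 1 + Im h *\<^sub>R D \<i>"
      by (subst w) (simp add: linear_add[OF l] linear_scale[OF l])
    also have "\<dots> = (of_real (Re h) + \<i> * of_real (Im h)) * c" using cr0 c
      by (simp add: scaleR_conv_of_real distrib_right)
    also have "of_real (Re h) + \<i> * of_real (Im h) = h" by (simp add: complex_eq_iff)
    finally show ?thesis by (simp add: mult.commute)
  qed
  then have "D = (*) c" by (simp add: fun_eq_iff)
  then show ?thesis unfolding has_field_derivative_def using d by simp
qed

definition hopf :: "(complex \<Rightarrow> real^3) \<Rightarrow> complex \<Rightarrow> complex" where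
  "hopf X z = Complex (sL X z - sN X z) (-2 * sM X z)"

lemma hopf_holo:
  assumes conf: "conformal_immersion_on U X" and H: "\<forall>w\<in>U. mean_curv X w = H"
  shows "hopf X holomorphic_on U"
proof -
  have "hopf X field_differentiable (at z)" if z: "z \<in> U" for z
  proof -
    have o: "open U" and sm: "cinf_on U X" using conf_basic[OF conf z] by auto
    have dN: "unit_normal X differentiable (at z)" using conf_basic(7)[OF conf z] .
    have dd: "pd a (pd b X) differentiable (at z)" for a b using cinf_diff[OF cinf_pd[OF cinf_pd[OF sm]] z] .
    have LL: "sL X = (\<lambda>w. inner (pd 1 (pd 1 X) w) (unit_normal X w))" by (rule ext) (simp add: sL_def)
    have MM: "sM X = (\<lambda>w. inner (pd \<i> (pd 1 X) w) (unit_normal X w))" by (rule ext) (simp add: sM_def)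
    have NN: "sN X = (\<lambda>w. inner (pd \<i> (pd \<i> X) w) (unit_normal X w))" by (rule ext) (simp add: sN_def)
    have dL: "sL X differentiable (at z)" "sM X differentiable (at z)" "sN X differentiable (at z)"
      unfolding LL MM NN using dd dN by auto
    have hh: "hopf X = (\<lambda>w. of_real (sL X w - sN X w) + \<i> * of_real (-2 * sM X w))"
      by (rule ext) (simp add: hopf_def complex_eq_iff)
    have d: "(hopf X has_derivative (\<lambda>h. of_real (pd h (sL X) z - pd h (sN X) z) + \<i> * of_real (-2 * pd h (sM X) z))) (at z)"
      unfolding hh
      by (intro has_derivative_add has_derivative_mult_right bounded_linear.has_derivative[OF bounded_linear_of_real]
           has_derivative_diff pd_has dL)
    have cr: "of_real (pd \<i> (sL X) z - pd \<i> (sN X) z) + \<i> * of_real (-2 * pd \<i> (sM X) z)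
        = \<i> * (of_real (pd 1 (sL X) z - pd 1 (sN X) z) + \<i> * of_real (-2 * pd 1 (sM X) z))"
      using hopf_CR[OF conf H z] by (simp add: complex_eq_iff)
    have "(hopf X has_field_derivative (of_real (pd 1 (sL X) z - pd 1 (sN X) z) + \<i> * of_real (-2 * pd 1 (sM X) z))) (at z)"
      by (rule CR_field[OF d]) (use cr in simp_all)
    then show ?thesis unfolding field_differentiable_def by (rule exI)
  qed
  then show ?thesis unfolding holomorphic_on_def using field_differentiable_at_within by metis
qed



lemma triple_cross: "cross3 (cross3 a b) b = inner a b *\<^sub>R b - inner b b *\<^sub>R a"
  by (simp add: cross3_simps inner_vec_def sum_3 vec_eq_iff forall_3)

lemma decomp3:
  fixes a b v :: "real^3"
  assumes "inner a a = 1" "inner b b = 1" "inner a b = 0" "inner v b = 0"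
  shows "v = inner v a *\<^sub>R a + inner v (cross3 a b) *\<^sub>R cross3 a b"
proof -
  define r where "r = v - (inner v a *\<^sub>R a + inner v (cross3 a b) *\<^sub>R cross3 a b)"
  have cc: "inner (cross3 a b) (cross3 a b) = 1"
    using norm_cross_dot[of a b] assms by (simp add: dot_square_norm[symmetric] power_mult_distrib)
  have ca: "inner (cross3 a b) a = 0" using dot_cross_self(1)[of a b] by (simp add: inner_commute)
  have cb: "inner (cross3 a b) b = 0" using dot_cross_self(3)[of a b] .
  have ba: "inner b a = 0" using assms(3) by (simp add: inner_commute)
  have ra: "inner r a = 0" unfolding r_def inner_diff_left inner_add_left inner_scaleR_left ca assms(1) by simp
  have rb: "inner r b = 0" unfolding r_def inner_diff_left inner_add_left inner_scaleR_left cb assms(3,4) by simp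
  have rc: "inner r (cross3 a b) = 0"
    unfolding r_def inner_diff_left inner_add_left inner_scaleR_left cc
    using dot_cross_self(1)[of a b] by simp
  have "(inner a a * inner b b) * inner r r = 0"
    using parseval3[OF assms(3), of r r] ra rb rc by simp
  then have "r = 0" using assms by simp
  then show ?thesis by (simp add: r_def)
qed

lemma diff_cross_gen:
  fixes f g :: "'a::real_normed_vector \<Rightarrow> real^3"
  assumes "f differentiable (at z)" "g differentiable (at z)"
  shows "(\<lambda>w. cross3 (f w) (g w)) differentiable (at z)"
  using assms unfolding differentiable_def
  by (blast intro: bounded_bilinear.FDERIV[OF bb_cross])

lemma vd_inner_const:
  fixes f g :: "real \<Rightarrow> real^3"
  assumes "(f has_vector_derivative f') (at t)" "(g has_vector_derivative g') (at t)"
    "\<And>s. inner (f s) (g s) = k"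
  shows "inner f' (g t) + inner (f t) g' = 0"
proof -
  have "((\<lambda>s. inner (f s) (g s)) has_derivative (\<lambda>h. inner (f t) (h *\<^sub>R g') + inner (h *\<^sub>R f') (g t))) (at t)"
    using has_derivative_inner[OF assms(1,2)[unfolded has_vector_derivative_def]] .
  moreover have "(\<lambda>s. inner (f s) (g s)) = (\<lambda>s. k)" using assms(3) by auto
  ultimately have "((\<lambda>s. k) has_derivative (\<lambda>h. inner (f t) (h *\<^sub>R g') + inner (h *\<^sub>R f') (g t))) (at t)" by simp
  then have "(\<lambda>h. inner (f t) (h *\<^sub>R g') + inner (h *\<^sub>R f') (g t)) = (\<lambda>h. 0)"
    using has_derivative_unique has_derivative_const by blast
  then have "inner (f t) (1 *\<^sub>R g') + inner (1 *\<^sub>R f') (g t) = 0" by meson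
  then show ?thesis by simp
qed

lemma circ_vd:
  assumes "F differentiable (at (cis t))"
  shows "((\<lambda>s. F (cis s)) has_vector_derivative pd (\<i> * cis t) F (cis t)) (at t)"
proof -
  have c: "((\<lambda>x. cis x) has_derivative (\<lambda>x. x *\<^sub>R (\<i> * cis t))) (at t)"
    using has_derivative_cis[OF has_derivative_ident[of "at t"]] by simp
  have "((\<lambda>s. F (cis s)) has_derivative (\<lambda>x. pd (x *\<^sub>R (\<i> * cis t)) F (cis t))) (at t)"
    using has_derivative_compose[OF c pd_has[OF assms]] .
  moreover have "(\<lambda>x. pd (x *\<^sub>R (\<i> * cis t)) F (cis t)) = (\<lambda>x. x *\<^sub>R pd (\<i> * cis t) F (cis t))"
  proof
    fix x
    have l: "linear (frechet_derivative F (at (cis t)))" using assms by (rule linear_frechet_derivative)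
    show "pd (x *\<^sub>R (\<i> * cis t)) F (cis t) = x *\<^sub>R pd (\<i> * cis t) F (cis t)"
      unfolding pd_def by (rule linear_scale[OF l])
  qed
  ultimately show ?thesis unfolding has_vector_derivative_def by simp
qed

lemma weingarten:
  assumes conf: "conformal_immersion_on U X" and z: "z \<in> U"
  shows "inner (pd 1 (unit_normal X) z) (pd 1 X z) = - sL X z"
    "inner (pd \<i> (unit_normal X) z) (pd 1 X z) = - sM X z"
    "inner (pd 1 (unit_normal X) z) (pd \<i> X z) = - sM X z"
    "inner (pd \<i> (unit_normal X) z) (pd \<i> X z) = - sN X z"
proof -
  have o: "open U" and sm: "cinf_on U X" using conf_basic[OF conf z] by auto
  have dX: "pd d X differentiable (at w)" if "w \<in> U" for d w using cinf_diff[OF cinf_pd[OF sm] that] .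
  have dN: "unit_normal X differentiable (at z)" using conf_basic(7)[OF conf z] .
  have fr: "inner (unit_normal X w) (pd 1 X w) = 0" "inner (unit_normal X w) (pd \<i> X w) = 0" if "w \<in> U" for w
    using frame(4,5)[OF conf_basic(3,4,5)[OF conf that]] conf_basic(6)[OF conf that] by auto
  have F4: "inner (pd d (unit_normal X) z) (pd 1 X z) + inner (unit_normal X z) (pd d (pd 1 X) z) = 0" for d
    by (rule pd_inner_const[OF o z fr(1)]) (auto intro: dX dN z)
  have F5: "inner (pd d (unit_normal X) z) (pd \<i> X z) + inner (unit_normal X z) (pd d (pd \<i> X) z) = 0" for d
    by (rule pd_inner_const[OF o z fr(2)]) (auto intro: dX dN z)
  have S1: "pd \<i> (pd 1 X) z = pd 1 (pd \<i> X) z" by (rule schwarz_vec[OF o z sm])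
  show "inner (pd 1 (unit_normal X) z) (pd 1 X z) = - sL X z" using F4[of 1] by (simp add: sL_def inner_commute)
  show "inner (pd \<i> (unit_normal X) z) (pd 1 X z) = - sM X z" using F4[of \<i>] by (simp add: sM_def inner_commute)
  show "inner (pd 1 (unit_normal X) z) (pd \<i> X z) = - sM X z" using F5[of 1] S1 by (simp add: sM_def inner_commute)
  show "inner (pd \<i> (unit_normal X) z) (pd \<i> X z) = - sN X z" using F5[of \<i>] by (simp add: sN_def inner_commute)
qed



lemma norm_cross_le: "norm (cross3 x y) \<le> norm x * norm y"
proof -
  have "(norm (cross3 x y))\<^sup>2 \<le> (norm x * norm y)\<^sup>2" using norm_cross_dot[of x y]
    by (metis le_add_same_cancel1 zero_le_power2)
  then show ?thesis by (rule power2_le_imp_le) simp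
qed

lemma imm_normal_diff:
  assumes S: "immersion_on V Y" and q: "q \<in> V"
  shows "unit_normal Y differentiable (at q)"
    "unit_normal Y q = (1 / norm (cross3 (pd 1 Y q) (pd \<i> Y q))) *\<^sub>R cross3 (pd 1 Y q) (pd \<i> Y q)"
    "cross3 (pd 1 Y q) (pd \<i> Y q) \<noteq> 0"
proof -
  have sm: "cinf_on V Y" using S by (auto simp: immersion_on_def)
  show nz: "cross3 (pd 1 Y q) (pd \<i> Y q) \<noteq> 0" using S q by (auto simp: immersion_on_def)
  show "unit_normal Y q = (1 / norm (cross3 (pd 1 Y q) (pd \<i> Y q))) *\<^sub>R cross3 (pd 1 Y q) (pd \<i> Y q)"
    by (simp add: unit_normal_def Let_def)
  have "unit_normal Y = (\<lambda>w. (1 / norm (cross3 (pd 1 Y w) (pd \<i> Y w))) *\<^sub>R cross3 (pd 1 Y w) (pd \<i> Y w))"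
    by (rule ext) (simp add: unit_normal_def Let_def)
  moreover have "(\<lambda>w. (1 / norm (cross3 (pd 1 Y w) (pd \<i> Y w))) *\<^sub>R cross3 (pd 1 Y w) (pd \<i> Y w)) differentiable (at q)"
    by (rule diff_unit[where n="\<lambda>w. cross3 (pd 1 Y w) (pd \<i> Y w)", OF diff_cross])
       (auto intro!: cinf_diff[OF cinf_pd[OF sm] q] nz)
  ultimately show "unit_normal Y differentiable (at q)" by simp
qed

lemma tangent_normal:
  fixes Y :: "complex \<Rightarrow> real^3" and \<beta> :: "real \<Rightarrow> complex" and \<gamma> :: "real \<Rightarrow> real^3"
  assumes S: "immersion_on V Y" and bc: "isCont \<beta> t" and bV: "\<beta> t \<in> V" and onS: "\<And>s. Y (\<beta> s) = \<gamma> s"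
    and gd: "(\<gamma> has_vector_derivative g') (at t)"
  shows "inner (unit_normal Y (\<beta> t)) g' = 0"
proof -
  define p where "p = \<beta> t"
  have sm: "cinf_on V Y" using S by (auto simp: immersion_on_def)
  have dY: "Y differentiable (at p)" using cinf_diff[OF sm] bV by (simp add: p_def)
  define A where "A = (\<lambda>h. pd h Y p)"
  have YA: "(Y has_derivative A) (at p)" unfolding A_def by (rule pd_has[OF dY])
  define Yu Yv where "Yu = pd 1 Y p" and "Yv = pd \<i> Y p"
  define c where "c = cross3 Yu Yv"
  have cnz: "c \<noteq> 0" using imm_normal_diff(3)[OF S bV] by (simp add: c_def Yu_def Yv_def p_def)
  define N where "N = unit_normal Y p"
  have Nc: "N = (1 / norm c) *\<^sub>R c" using imm_normal_diff(2)[OF S bV] by (simp add: N_def c_def Yu_def Yv_def p_def)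
  have nN: "norm N = 1" using cnz by (simp add: Nc)
  have Ah: "A h = Re h *\<^sub>R Yu + Im h *\<^sub>R Yv" for h unfolding A_def Yu_def Yv_def by (rule pd_dir[OF dY])
  have NA: "inner N (A h) = 0" for h
    by (simp add: Nc Ah c_def inner_add_right dot_cross_self inner_commute)
  have lower: "norm c * norm h \<le> (norm Yu + norm Yv) * norm (A h)" for h
  proof -
    have e1: "cross3 Yu (A h) = Im h *\<^sub>R c" by (simp add: Ah c_def cross_add_right cross_mult_right)
    have e2: "cross3 (A h) Yv = Re h *\<^sub>R c" by (simp add: Ah c_def cross_add_left cross_mult_left)
    have i1: "\<bar>Im h\<bar> * norm c \<le> norm Yu * norm (A h)" using norm_cross_le[of Yu "A h"] e1 by simp
    have i2: "\<bar>Re h\<bar> * norm c \<le> norm (A h) * norm Yv" using norm_cross_le[of "A h" Yv] e2 by simp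
    have "norm c * norm h \<le> norm c * (\<bar>Re h\<bar> + \<bar>Im h\<bar>)" by (rule mult_left_mono[OF cmod_le]) simp
    also have "\<dots> \<le> (norm Yu + norm Yv) * norm (A h)" using i1 i2 by (simp add: algebra_simps)
    finally show ?thesis .
  qed
  have "Yu \<noteq> 0" using cnz by (auto simp: c_def)
  then have YuYv: "norm Yu + norm Yv > 0" by (simp add: add_pos_nonneg)
  define m where "m = norm c / (norm Yu + norm Yv)"
  have m: "m > 0" using cnz YuYv by (simp add: m_def)
  have mlow: "m * norm h \<le> norm (A h)" for h
    using lower[of h] YuYv by (simp add: m_def field_simps)
  define x where "x = inner N g'"
  have bound: "\<bar>x\<bar> \<le> e / (m - e) * (norm g' + 1)" if e: "0 < e" "e < m" for e
  proof -
    obtain d where d: "d > 0" "\<And>q. norm (q - p) < d \<Longrightarrow> norm (Y q - Y p - A (q - p)) \<le> e * norm (q - p)"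
      using YA e(1) unfolding has_derivative_at_alt by blast
    obtain d1 where d1: "d1 > 0" "\<And>s. dist s t < d1 \<Longrightarrow> dist (\<beta> s) p < d"
      using bc d(1) unfolding continuous_at_eps_delta p_def by blast
    have "(\<gamma> has_derivative (\<lambda>h. h *\<^sub>R g')) (at t)" using gd by (simp add: has_vector_derivative_def)
    then obtain d2 where d2: "d2 > 0" "\<And>s. norm (s - t) < d2 \<Longrightarrow> norm (\<gamma> s - \<gamma> t - (s - t) *\<^sub>R g') \<le> 1 * norm (s - t)"
      unfolding has_derivative_at_alt by (meson zero_less_one)
    define K where "K = e / (m - e) * (norm g' + 1)"
    have qb: "\<bar>(inner N (\<gamma> (t + h)) - inner N (\<gamma> t)) / h\<bar> \<le> K" if h: "h \<noteq> 0" "\<bar>h\<bar> < min d1 d2" for h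
    proof -
      define s where "s = t + h"
      define \<delta> where "\<delta> = \<beta> s - p"
      define \<Delta> where "\<Delta> = \<gamma> s - \<gamma> t"
      have \<Delta>Y: "\<Delta> = Y (\<beta> s) - Y p" by (simp add: \<Delta>_def onS p_def)
      have "dist (\<beta> s) p < d" using d1(2)[of s] h by (simp add: s_def dist_real_def)
      then have nd: "norm \<delta> < d" by (simp add: \<delta>_def dist_norm)
      have c1: "norm (\<Delta> - A \<delta>) \<le> e * norm \<delta>"
        using d(2)[of "\<beta> s"] nd unfolding \<Delta>Y \<delta>_def by simp
      have c2: "norm \<Delta> \<le> (norm g' + 1) * \<bar>h\<bar>"
      proof -
        have "norm (\<Delta> - h *\<^sub>R g') \<le> \<bar>h\<bar>" using d2(2)[of s] h by (simp add: s_def \<Delta>_def)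
        moreover have "norm \<Delta> \<le> norm (\<Delta> - h *\<^sub>R g') + norm (h *\<^sub>R g')"
          using norm_triangle_sub[of \<Delta> "h *\<^sub>R g'"] by simp
        ultimately show ?thesis by (simp add: algebra_simps)
      qed
      have c3: "(m - e) * norm \<delta> \<le> norm \<Delta>"
      proof -
        have "norm (A \<delta>) \<le> norm \<Delta> + norm (\<Delta> - A \<delta>)" by (rule norm_triangle_sub[of "A \<delta>" \<Delta>, simplified norm_minus_commute])
        then show ?thesis using mlow[of \<delta>] c1 by (simp add: algebra_simps)
      qed
      have c4: "\<bar>inner N \<Delta>\<bar> \<le> e * norm \<delta>"
      proof -
        have "inner N \<Delta> = inner N (\<Delta> - A \<delta>)" using NA[of \<delta>] by (simp add: inner_diff_right)
        also have "\<bar>\<dots>\<bar> \<le> norm N * norm (\<Delta> - A \<delta>)" by (rule Cauchy_Schwarz_ineq2)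
        finally show ?thesis using nN c1 by simp
      qed
      have "e * norm \<delta> = e / (m - e) * ((m - e) * norm \<delta>)" using e by (simp add: field_simps)
      also have "\<dots> \<le> e / (m - e) * norm \<Delta>"
        using c3 e by (intro mult_left_mono) auto
      also have "\<dots> \<le> e / (m - e) * ((norm g' + 1) * \<bar>h\<bar>)"
        using c2 e by (intro mult_left_mono) auto
      also have "\<dots> = K * \<bar>h\<bar>" by (simp add: K_def)
      finally have "e * norm \<delta> \<le> K * \<bar>h\<bar>" .
      then have "\<bar>inner N \<Delta>\<bar> \<le> K * \<bar>h\<bar>" using c4 by linarith
      then show ?thesis using h(1) by (simp add: \<Delta>_def s_def inner_diff_right abs_divide divide_le_eq)
    qed
    have "DERIV (\<lambda>s. inner N (\<gamma> s)) t :> inner N g'"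
      unfolding has_field_derivative_def
      using has_derivative_inner_right[OF gd[unfolded has_vector_derivative_def], of N]
      by (rule has_derivative_eq_rhs) (simp add: fun_eq_iff mult.commute)
    then have lim: "((\<lambda>h. (inner N (\<gamma> (t + h)) - inner N (\<gamma> t)) / h) \<longlongrightarrow> inner N g') (at 0)"
      by (simp add: DERIV_def)
    have ev: "eventually (\<lambda>h. norm ((inner N (\<gamma> (t + h)) - inner N (\<gamma> t)) / h) \<le> K) (at 0)"
      unfolding eventually_at using d1(1) d2(1) qb by (intro exI[of _ "min d1 d2"]) auto
    have "norm (inner N g') \<le> K" by (rule Lim_norm_ubound[OF _ lim ev]) simp
    then show ?thesis by (simp add: x_def K_def)
  qed
  have "\<bar>x\<bar> \<le> 0"
  proof (rule field_le_epsilon)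
    fix \<epsilon> :: real assume \<epsilon>: "\<epsilon> > 0"
    define e where "e = min (m / 2) (\<epsilon> * m / (2 * (norm g' + 1)))"
    have p1: "0 < \<epsilon> * m / (2 * (norm g' + 1))"
      using m \<epsilon> by (intro divide_pos_pos mult_pos_pos) (auto simp: add_nonneg_pos)
    have e0: "0 < e" using m p1 by (simp add: e_def)
    have e2: "e \<le> m / 2" "e \<le> \<epsilon> * m / (2 * (norm g' + 1))" unfolding e_def by (rule min.cobounded1, rule min.cobounded2)
    have e: "0 < e" "e < m" "e \<le> m / 2" "e \<le> \<epsilon> * m / (2 * (norm g' + 1))"
      using e0 e2 m by auto
    have "e / (m - e) \<le> 2 * e / m" using e m by (simp add: field_simps)
    then have "e / (m - e) * (norm g' + 1) \<le> 2 * e / m * (norm g' + 1)" by (intro mult_right_mono) auto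
    also have "\<dots> \<le> \<epsilon>"
    proof -
      have pd: "2 * (norm g' + 1) > 0" by (simp add: add_nonneg_pos)
      have q: "e * (2 * (norm g' + 1)) \<le> \<epsilon> * m" using e(4) pd by (simp add: le_divide_eq)
      then show ?thesis using m by (simp add: field_simps)
    qed
    finally show "\<bar>x\<bar> \<le> 0 + \<epsilon>" using bound[OF e(1,2)] by simp
  qed
  then show ?thesis by (simp add: x_def N_def p_def)
qed



lemma pt_facts:
  assumes conf: "conformal_immersion_on U X" and p: "p \<in> U" and w: "(Re w)\<^sup>2 + (Im w)\<^sup>2 = 1"
  shows "inner (unit_normal X p) (pd w X p) = 0"
    "inner (pd w X p) (pd w X p) = fE X p"
    "fE X p > 0"
    "inner (unit_normal X p) (unit_normal X p) = 1"
    "inner (cross3 (unit_normal X p) (pd w X p)) (pd w (unit_normal X) p)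
       = ((Im w)\<^sup>2 - (Re w)\<^sup>2) * sM X p + Re w * Im w * (sL X p - sN X p)"
proof -
  have sm: "cinf_on U X" using conf_basic[OF conf p] by auto
  have dX: "X differentiable (at p)" using cinf_diff[OF sm p] .
  have dN: "unit_normal X differentiable (at p)" using conf_basic(7)[OF conf p] .
  define Xu Xv N where "Xu = pd 1 X p" and "Xv = pd \<i> X p" and "N = unit_normal X p"
  have o: "inner Xu Xv = 0" "inner Xv Xv = inner Xu Xu" "Xu \<noteq> 0" using conf_basic(3,4,5)[OF conf p] by (auto simp: Xu_def Xv_def)
  have Nd: "N = (1 / norm (cross3 Xu Xv)) *\<^sub>R cross3 Xu Xv" using conf_basic(6)[OF conf p] by (simp add: N_def Xu_def Xv_def)
  have fr: "inner N N = 1" "inner N Xu = 0" "inner N Xv = 0" "cross3 N Xu = Xv" "cross3 N Xv = - Xu"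
    using frame(3-7)[OF o] Nd by auto
  have Xw: "pd w X p = Re w *\<^sub>R Xu + Im w *\<^sub>R Xv" unfolding Xu_def Xv_def by (rule pd_dir[OF dX])
  have Nw: "pd w (unit_normal X) p = Re w *\<^sub>R pd 1 (unit_normal X) p + Im w *\<^sub>R pd \<i> (unit_normal X) p"
    by (rule pd_dir[OF dN])
  have E: "fE X p = inner Xu Xu" by (simp add: fE_def Xu_def)
  show "inner (unit_normal X p) (pd w X p) = 0" using fr by (simp add: Xw N_def[symmetric] inner_add_right)
  have "inner (pd w X p) (pd w X p) = ((Re w)\<^sup>2 + (Im w)\<^sup>2) * inner Xu Xu"
    using o by (simp add: Xw inner_add_left inner_add_right inner_commute power2_eq_square algebra_simps)
  then show "inner (pd w X p) (pd w X p) = fE X p" using w E by simp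
  show "fE X p > 0" using o(3) E by simp
  show "inner (unit_normal X p) (unit_normal X p) = 1" using fr by (simp add: N_def)
  have W: "inner (pd 1 (unit_normal X) p) Xu = - sL X p" "inner (pd \<i> (unit_normal X) p) Xu = - sM X p"
    "inner (pd 1 (unit_normal X) p) Xv = - sM X p" "inner (pd \<i> (unit_normal X) p) Xv = - sN X p"
    using weingarten[OF conf p] by (auto simp: Xu_def Xv_def)
  have cr: "cross3 (unit_normal X p) (pd w X p) = Re w *\<^sub>R Xv - Im w *\<^sub>R Xu"
    using fr by (simp add: Xw N_def[symmetric] cross_add_right cross_mult_right)
  show "inner (cross3 (unit_normal X p) (pd w X p)) (pd w (unit_normal X) p)
       = ((Im w)\<^sup>2 - (Re w)\<^sup>2) * sM X p + Re w * Im w * (sL X p - sN X p)"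
    unfolding cr Nw using W
    by (simp add: inner_add_left inner_add_right inner_diff_left inner_commute power2_eq_square algebra_simps)
qed



lemma diff_unit_gen:
  fixes n :: "'a::real_normed_vector \<Rightarrow> real^3"
  assumes "n differentiable (at z)" "n z \<noteq> 0"
  shows "(\<lambda>w. (1 / norm (n w)) *\<^sub>R n w) differentiable (at z)"
proof -
  have "(\<lambda>w. norm (n w)) differentiable (at z)"
    using differentiable_compose[of norm n z] assms differentiable_norm_at[OF assms(2)] by (simp add: o_def)
  then have "(\<lambda>w. 1 / norm (n w)) differentiable (at z)"
    using assms(2) by (intro differentiable_divide) auto
  then show ?thesis using assms(1) by (rule differentiable_scaleR)
qed

lemma torsion_formula:
  assumes conf: "conformal_immersion_on U X" and circ: "\<And>s. cis s \<in> U"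
    and NS: "\<And>s. NS s = c *\<^sub>R unit_normal X (cis s) + \<sigma> *\<^sub>R cross3 (unit_normal X (cis s))
              ((1 / norm (pd (\<i> * cis s) X (cis s))) *\<^sub>R pd (\<i> * cis s) X (cis s))"
    and cs: "c\<^sup>2 + \<sigma>\<^sup>2 = 1"
  shows "geodesic_torsion (\<lambda>s. X (cis s)) NS t = Im ((cis t)\<^sup>2 * hopf X (cis t)) / (2 * fE X (cis t))"
proof -
  have sm: "cinf_on U X" using conf_basic[OF conf circ] by auto
  define Tg where "Tg s = pd (\<i> * cis s) X (cis s)" for s
  define n where "n s = unit_normal X (cis s)" for s
  define T where "T s = (1 / norm (Tg s)) *\<^sub>R Tg s" for s
  define \<nu> where "\<nu> s = cross3 (n s) (T s)" for s
  have w1: "(Re (\<i> * cis s))\<^sup>2 + (Im (\<i> * cis s))\<^sup>2 = 1" for s by simp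
  note pf = pt_facts[OF conf circ w1]
  have E0: "fE X (cis s) > 0" for s using pf(3) .
  have TgTg: "inner (Tg s) (Tg s) = fE X (cis s)" for s using pf(2) by (simp add: Tg_def)
  have nTg: "(norm (Tg s))\<^sup>2 = fE X (cis s)" for s using TgTg by (simp add: dot_square_norm)
  have Tgnz: "Tg s \<noteq> 0" for s using TgTg[of s] E0[of s] by auto
  have nT: "inner (n s) (T s) = 0" for s using pf(1) by (simp add: n_def T_def Tg_def)
  have TT: "inner (T s) (T s) = 1" for s using Tgnz by (simp add: T_def dot_square_norm)
  have nn: "inner (n s) (n s) = 1" for s using pf(4) by (simp add: n_def)
  have \<nu>\<nu>: "inner (\<nu> s) (\<nu> s) = 1" for s
  proof -
    have "(norm (\<nu> s))\<^sup>2 + (inner (n s) (T s))\<^sup>2 = (norm (n s) * norm (T s))\<^sup>2"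
      unfolding \<nu>_def by (rule norm_cross_dot)
    then show ?thesis using nT[of s] nn[of s] TT[of s]
      by (simp add: dot_square_norm power_mult_distrib)
  qed
  have \<nu>n: "inner (\<nu> s) (n s) = 0" for s using dot_cross_self(1)[of "n s" "T s"] by (simp add: \<nu>_def inner_commute)
  have \<gamma>d: "((\<lambda>s. X (cis s)) has_vector_derivative Tg s) (at s)" for s
    unfolding Tg_def by (rule circ_vd[OF cinf_diff[OF sm circ]])
  have vd\<gamma>: "vector_derivative (\<lambda>s. X (cis s)) (at s) = Tg s" for s by (rule vector_derivative_at[OF \<gamma>d])
  define n' where "n' = pd (\<i> * cis t) (unit_normal X) (cis t)"
  have nd: "(n has_vector_derivative n') (at t)"
    unfolding n_def n'_def using circ_vd[OF conf_basic(7)[OF conf circ]] by simp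
  have dXc: "(\<lambda>s. pd d X (cis s)) differentiable (at t)" for d
    using differentiableI_vector[OF circ_vd[OF cinf_diff[OF cinf_pd[OF sm] circ]]] .
  have Tge: "Tg = (\<lambda>s. (- sin s) *\<^sub>R pd 1 X (cis s) + cos s *\<^sub>R pd \<i> X (cis s))"
  proof
    fix s show "Tg s = (- sin s) *\<^sub>R pd 1 X (cis s) + cos s *\<^sub>R pd \<i> X (cis s)"
      unfolding Tg_def using pd_dir[OF cinf_diff[OF sm circ], of "\<i> * cis s"] by simp
  qed
  have dsin: "(\<lambda>s. - sin s) differentiable (at t)" "(\<lambda>s. cos s) differentiable (at t)"
    by (rule differentiableI[where f'="\<lambda>h. h * - cos t"], auto intro!: derivative_eq_intros)
       (rule differentiableI[where f'="\<lambda>h. h * - sin t"], auto intro!: derivative_eq_intros)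
  have dTg: "Tg differentiable (at t)"
    unfolding Tge using dsin dXc by (intro differentiable_add differentiable_scaleR) auto
  have dT: "T differentiable (at t)"
  proof -
    have "(\<lambda>s. (1 / norm (Tg s)) *\<^sub>R Tg s) differentiable (at t)" by (rule diff_unit_gen[OF dTg Tgnz])
    then show ?thesis by (simp add: T_def[abs_def])
  qed
  have d\<nu>: "\<nu> differentiable (at t)"
  proof -
    have "(\<lambda>s. cross3 (n s) (T s)) differentiable (at t)"
      by (rule diff_cross_gen[OF differentiableI_vector[OF nd] dT])
    then show ?thesis by (simp add: \<nu>_def[abs_def])
  qed
  define \<nu>' where "\<nu>' = vector_derivative \<nu> (at t)"
  have \<nu>d: "(\<nu> has_vector_derivative \<nu>') (at t)" unfolding \<nu>'_def using d\<nu> vector_derivative_works by blast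
  have Fe: "(\<lambda>s. cross3 (NS s) ((1 / norm (vector_derivative (\<lambda>s. X (cis s)) (at s))) *\<^sub>R vector_derivative (\<lambda>s. X (cis s)) (at s)))
      = (\<lambda>s. c *\<^sub>R \<nu> s - \<sigma> *\<^sub>R n s)"
  proof
    fix s
    have NSs: "NS s = c *\<^sub>R n s + \<sigma> *\<^sub>R \<nu> s" using NS[of s] by (simp add: n_def \<nu>_def T_def Tg_def)
    have "cross3 (\<nu> s) (T s) = - n s" unfolding \<nu>_def triple_cross using nT[of s] TT[of s] by simp
    then show "cross3 (NS s) ((1 / norm (vector_derivative (\<lambda>s. X (cis s)) (at s))) *\<^sub>R vector_derivative (\<lambda>s. X (cis s)) (at s))
      = c *\<^sub>R \<nu> s - \<sigma> *\<^sub>R n s"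
      unfolding vd\<gamma> T_def[symmetric] NSs by (simp add: cross_add_left cross_mult_left \<nu>_def[symmetric])
  qed
  have Fd: "((\<lambda>s. c *\<^sub>R \<nu> s - \<sigma> *\<^sub>R n s) has_vector_derivative (c *\<^sub>R \<nu>' - \<sigma> *\<^sub>R n')) (at t)"
    using has_vector_derivative_diff[OF has_vector_derivative_scaleR[OF DERIV_const \<nu>d]
        has_vector_derivative_scaleR[OF DERIV_const nd]] by simp
  have gt: "geodesic_torsion (\<lambda>s. X (cis s)) NS t = inner (c *\<^sub>R \<nu>' - \<sigma> *\<^sub>R n') (NS t) / norm (Tg t)"
    unfolding geodesic_torsion_def Fe unfolding vector_derivative_at[OF Fd] vd\<gamma> ..
  have I1: "inner \<nu>' (n t) + inner (\<nu> t) n' = 0" by (rule vd_inner_const[OF \<nu>d nd \<nu>n])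
  have I2: "inner \<nu>' (\<nu> t) + inner (\<nu> t) \<nu>' = 0" by (rule vd_inner_const[OF \<nu>d \<nu>d \<nu>\<nu>])
  have I3: "inner n' (n t) + inner (n t) n' = 0" by (rule vd_inner_const[OF nd nd nn])
  have NSt: "NS t = c *\<^sub>R n t + \<sigma> *\<^sub>R \<nu> t" using NS[of t] by (simp add: n_def \<nu>_def T_def Tg_def)
  have inr: "inner (c *\<^sub>R \<nu>' - \<sigma> *\<^sub>R n') (NS t) = - inner (\<nu> t) n'"
  proof -
    have a: "inner \<nu>' (\<nu> t) = 0" using I2 by (simp add: inner_commute)
    have b: "inner n' (n t) = 0" using I3 by (simp add: inner_commute)
    have "inner (c *\<^sub>R \<nu>' - \<sigma> *\<^sub>R n') (NS t) = c * c * inner \<nu>' (n t) + c * \<sigma> * inner \<nu>' (\<nu> t)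
        - \<sigma> * c * inner n' (n t) - \<sigma> * \<sigma> * inner n' (\<nu> t)"
      unfolding NSt by (simp add: inner_diff_left inner_add_right algebra_simps)
    also have "\<dots> = - (c\<^sup>2 + \<sigma>\<^sup>2) * inner (\<nu> t) n'"
    proof -
      have d: "inner \<nu>' (n t) = - inner (\<nu> t) n'" using I1 by simp
      have e: "inner n' (\<nu> t) = inner (\<nu> t) n'" by (rule inner_commute)
      show ?thesis unfolding a b d e by (simp add: power2_eq_square algebra_simps)
    qed
    finally show ?thesis using cs by simp
  qed
  have Q: "inner (\<nu> t) n' = (1 / norm (Tg t)) * (((Im (\<i> * cis t))\<^sup>2 - (Re (\<i> * cis t))\<^sup>2) * sM X (cis t)
      + Re (\<i> * cis t) * Im (\<i> * cis t) * (sL X (cis t) - sN X (cis t)))"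
    using pf(5)[of t] by (simp add: \<nu>_def T_def n_def n'_def Tg_def cross_mult_right)
  have tau: "geodesic_torsion (\<lambda>s. X (cis s)) NS t = (sin t * cos t * (sL X (cis t) - sN X (cis t))
       - ((cos t)\<^sup>2 - (sin t)\<^sup>2) * sM X (cis t)) / fE X (cis t)"
  proof -
    have "geodesic_torsion (\<lambda>s. X (cis s)) NS t = - inner (\<nu> t) n' / norm (Tg t)" using gt inr by simp
    also have "\<dots> = - (((cos t)\<^sup>2 - (sin t)\<^sup>2) * sM X (cis t) - sin t * cos t * (sL X (cis t) - sN X (cis t)))
          / (norm (Tg t))\<^sup>2"
      unfolding Q using Tgnz[of t] by (simp add: power2_eq_square field_simps)
    also have "\<dots> = (sin t * cos t * (sL X (cis t) - sN X (cis t))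
       - ((cos t)\<^sup>2 - (sin t)\<^sup>2) * sM X (cis t)) / fE X (cis t)"
      unfolding nTg by (simp add: algebra_simps)
    finally show ?thesis .
  qed
  have imv: "Im ((cis t)\<^sup>2 * hopf X (cis t)) = 2 * sin t * cos t * (sL X (cis t) - sN X (cis t))
      - 2 * ((cos t)\<^sup>2 - (sin t)\<^sup>2) * sM X (cis t)"
    by (simp add: hopf_def power2_eq_square cis.sel algebra_simps)
  show ?thesis unfolding tau imv using E0[of t] by (simp add: field_simps)
qed



lemma frame_diff:
  assumes conf: "conformal_immersion_on U X" and circ: "\<And>s. cis s \<in> U"
  shows "(\<lambda>s. cross3 (unit_normal X (cis s)) ((1 / norm (pd (\<i> * cis s) X (cis s))) *\<^sub>R pd (\<i> * cis s) X (cis s)))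
           differentiable (at t)"
proof -
  have sm: "cinf_on U X" using conf_basic[OF conf circ] by auto
  define Tg where "Tg s = pd (\<i> * cis s) X (cis s)" for s
  have w1: "(Re (\<i> * cis s))\<^sup>2 + (Im (\<i> * cis s))\<^sup>2 = 1" for s by simp
  note pf = pt_facts[OF conf circ w1]
  have TgTg: "inner (Tg s) (Tg s) = fE X (cis s)" for s using pf(2) by (simp add: Tg_def)
  have Tgnz: "Tg s \<noteq> 0" for s using TgTg[of s] pf(3)[of s] by auto
  have dXc: "(\<lambda>s. pd d X (cis s)) differentiable (at t)" for d
    using differentiableI_vector[OF circ_vd[OF cinf_diff[OF cinf_pd[OF sm] circ]]] .
  have Tge: "Tg = (\<lambda>s. (- sin s) *\<^sub>R pd 1 X (cis s) + cos s *\<^sub>R pd \<i> X (cis s))"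
  proof
    fix s show "Tg s = (- sin s) *\<^sub>R pd 1 X (cis s) + cos s *\<^sub>R pd \<i> X (cis s)"
      unfolding Tg_def using pd_dir[OF cinf_diff[OF sm circ], of "\<i> * cis s"] by simp
  qed
  have dsin: "(\<lambda>s. - sin s) differentiable (at t)" "(\<lambda>s. cos s) differentiable (at t)"
    by (rule differentiableI[where f'="\<lambda>h. h * - cos t"], auto intro!: derivative_eq_intros)
       (rule differentiableI[where f'="\<lambda>h. h * - sin t"], auto intro!: derivative_eq_intros)
  have dTg: "Tg differentiable (at t)"
    unfolding Tge using dsin dXc by (intro differentiable_add differentiable_scaleR) auto
  have dT: "(\<lambda>s. (1 / norm (Tg s)) *\<^sub>R Tg s) differentiable (at t)" by (rule diff_unit_gen[OF dTg Tgnz])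
  have dn: "(\<lambda>s. unit_normal X (cis s)) differentiable (at t)"
    using differentiableI_vector[OF circ_vd[OF conf_basic(7)[OF conf circ]]] .
  show ?thesis using diff_cross_gen[OF dn dT] by (simp add: Tg_def)
qed

lemma sigma_const:
  fixes \<sigma> :: "real \<Rightarrow> real"
  assumes c: "continuous_on UNIV \<sigma>" and sq: "\<And>s. (\<sigma> s)\<^sup>2 = k"
  shows "\<sigma> s = \<sigma> 0"
proof (rule ccontr)
  assume ne: "\<sigma> s \<noteq> \<sigma> 0"
  have "(\<sigma> s)\<^sup>2 = (\<sigma> 0)\<^sup>2" using sq by simp
  then have m: "\<sigma> s = - \<sigma> 0" using ne by (metis power2_eq_iff)
  have "0 \<in> closed_segment (\<sigma> 0) (\<sigma> s)" unfolding m closed_segment_eq_real_ivl by auto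
  moreover have "continuous_on (closed_segment 0 s) \<sigma>" using c continuous_on_subset by blast
  ultimately obtain x where "\<sigma> x = 0" using IVT'_closed_segment_real[of 0 \<sigma> 0 s] by auto
  then have "k = 0" using sq[of x] by simp
  then have "\<sigma> s = 0" "\<sigma> 0 = 0" using sq[of s] sq[of 0] by auto
  then show False using ne by simp
qed

lemma holo_real_const:
  fixes f :: "complex \<Rightarrow> complex" and z0 :: complex
  assumes h: "f holomorphic_on ball 0 1" and im: "\<And>z. z \<in> ball 0 1 \<Longrightarrow> Im (f z) = 0"
    and z0: "z0 \<in> ball 0 1"
  shows "f z0 = f 0"
proof -
  have "(f has_field_derivative 0) (at z within ball 0 1)" if z: "z \<in> ball 0 1" for z
  proof -
    obtain D where D: "(f has_field_derivative D) (at z)"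
      using h z holomorphic_on_open[OF open_ball] by blast
    have d1: "((\<lambda>x. Im (f x)) has_derivative (\<lambda>h. Im (D * h))) (at z)"
      using bounded_linear.has_derivative[OF bounded_linear_Im D[unfolded has_field_derivative_def]] by simp
    have d2: "((\<lambda>x. Im (f x)) has_derivative (\<lambda>h. 0)) (at z)"
      by (rule has_derivative_transform_within_open[OF has_derivative_const open_ball z]) (simp add: im)
    have "(\<lambda>h. Im (D * h)) = (\<lambda>h. 0)" using has_derivative_unique[OF d1 d2] .
    then have "Im (D * 1) = 0" "Im (D * \<i>) = 0" by meson+
    then have "D = 0" by (simp add: complex_eq_iff)
    then show ?thesis using D has_field_derivative_at_within by blast
  qed
  then obtain c where c: "\<forall>x\<in>ball 0 1. f x = c"
    using has_field_derivative_zero_constant[OF convex_ball] by blast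
  show "f z0 = f 0" using c z0 by simp
qed

lemma hopf_zero_umbilic:
  assumes conf: "conformal_immersion_on U X" and z: "z \<in> U" and h: "hopf X z = 0"
  shows "umbilic X z"
proof -
  have o: "fF X z = 0" "fG X z = fE X z" "fE X z > 0"
    using conf_basic(3,4,5)[OF conf z] by (auto simp: fF_def fG_def fE_def)
  have "sL X z = sN X z" "sM X z = 0" using h by (auto simp: hopf_def complex_eq_iff)
  then show ?thesis unfolding umbilic_def using o
    by (intro exI[of _ "sL X z / fE X z"]) auto
qed

lemma umbilic_hopf_zero:
  assumes conf: "conformal_immersion_on U X" and z: "z \<in> U" and u: "umbilic X z"
  shows "hopf X z = 0"
proof -
  have o: "fF X z = 0" "fG X z = fE X z"
    using conf_basic(3,4)[OF conf z] by (auto simp: fF_def fG_def fE_def)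
  obtain k where "sL X z = k * fE X z" "sM X z = k * fF X z" "sN X z = k * fG X z" using u by (auto simp: umbilic_def)
  then show ?thesis using o by (simp add: hopf_def complex_eq_iff)
qed



theorem theorem3p2:
  fixes X Y :: "complex \<Rightarrow> real^3" and U V :: "complex set" and \<beta> :: "real \<Rightarrow> complex"
  assumes disc: "cball 0 1 \<subseteq> U"
    and confX: "conformal_immersion_on U X"
    and cmc: "\<exists>H. \<forall>z\<in>U. mean_curv X z = H"
    and analytic: "real_analytic_on UNIV (\<lambda>t. X (cis t))"
    and S: "immersion_on V Y"
    and lift: "continuous_on UNIV \<beta>" "\<forall>t. \<beta> t \<in> V" "\<forall>t. \<beta> (t + 2 * pi) = \<beta> t"
    and onS: "\<forall>t. Y (\<beta> t) = X (cis t)"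
    and angle: "\<exists>c. \<forall>t. inner (unit_normal X (cis t)) (unit_normal Y (\<beta> t)) = c"
  shows "((\<forall>z\<in>cball 0 1. umbilic X z) \<longleftrightarrow>
           (\<exists>c. \<forall>t. geodesic_torsion (\<lambda>t. X (cis t)) (\<lambda>t. unit_normal Y (\<beta> t)) t = c))
       \<and> ((\<forall>z\<in>cball 0 1. umbilic X z) \<longrightarrow>
           (\<forall>t. geodesic_torsion (\<lambda>t. X (cis t)) (\<lambda>t. unit_normal Y (\<beta> t)) t = 0))"
proof -
  obtain H where H: "\<forall>z\<in>U. mean_curv X z = H" using cmc by blast
  obtain c where ang: "\<And>t. inner (unit_normal X (cis t)) (unit_normal Y (\<beta> t)) = c" using angle by blast
  have circ: "\<And>s. cis s \<in> U" using disc by (auto simp: subset_iff dist_norm)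
  have sm: "cinf_on U X" using conf_basic[OF confX circ] by auto
  have oU: "open U" using conf_basic[OF confX circ] by auto
  define n where "n s = unit_normal X (cis s)" for s
  define Tg where "Tg s = pd (\<i> * cis s) X (cis s)" for s
  define T where "T s = (1 / norm (Tg s)) *\<^sub>R Tg s" for s
  define \<nu> where "\<nu> s = cross3 (n s) (T s)" for s
  have w1: "(Re (\<i> * cis s))\<^sup>2 + (Im (\<i> * cis s))\<^sup>2 = 1" for s by simp
  note pf = pt_facts[OF confX circ w1]
  have TgTg: "inner (Tg s) (Tg s) = fE X (cis s)" for s using pf(2) by (simp add: Tg_def)
  have Tgnz: "Tg s \<noteq> 0" for s using TgTg[of s] pf(3)[of s] by auto
  have nT: "inner (n s) (T s) = 0" for s using pf(1) by (simp add: n_def T_def Tg_def)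
  have TT: "inner (T s) (T s) = 1" for s using Tgnz by (simp add: T_def dot_square_norm)
  have nn: "inner (n s) (n s) = 1" for s using pf(4) by (simp add: n_def)
  have \<nu>\<nu>: "inner (\<nu> s) (\<nu> s) = 1" for s
  proof -
    have "(norm (\<nu> s))\<^sup>2 + (inner (n s) (T s))\<^sup>2 = (norm (n s) * norm (T s))\<^sup>2"
      unfolding \<nu>_def by (rule norm_cross_dot)
    then show ?thesis using nT[of s] nn[of s] TT[of s]
      by (simp add: dot_square_norm power_mult_distrib)
  qed
  have \<nu>n: "inner (\<nu> s) (n s) = 0" for s using dot_cross_self(1)[of "n s" "T s"] by (simp add: \<nu>_def inner_commute)
  have bcont: "isCont \<beta> s" for s using lift(1) continuous_on_eq_continuous_at open_UNIV by blast
  have NSn: "inner (unit_normal Y (\<beta> s)) (unit_normal Y (\<beta> s)) = 1" for s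
  proof -
    have "cross3 (pd 1 Y (\<beta> s)) (pd \<i> Y (\<beta> s)) \<noteq> 0" using imm_normal_diff(3)[OF S] lift(2) by blast
    then show ?thesis using imm_normal_diff(2)[OF S] lift(2) by (simp add: dot_square_norm)
  qed
  have NST: "inner (unit_normal Y (\<beta> s)) (T s) = 0" for s
  proof -
    have "inner (unit_normal Y (\<beta> s)) (Tg s) = 0"
      using tangent_normal[where \<gamma>="\<lambda>s. X (cis s)", OF S bcont lift(2)[rule_format] onS[rule_format]
          circ_vd[OF cinf_diff[OF sm circ]]] by (simp add: Tg_def)
    then show ?thesis by (simp add: T_def)
  qed
  define \<sigma> where "\<sigma> s = inner (unit_normal Y (\<beta> s)) (\<nu> s)" for s
  have dec: "unit_normal Y (\<beta> s) = c *\<^sub>R n s + \<sigma> s *\<^sub>R \<nu> s" for s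
  proof -
    have "unit_normal Y (\<beta> s) = inner (unit_normal Y (\<beta> s)) (n s) *\<^sub>R n s
        + inner (unit_normal Y (\<beta> s)) (cross3 (n s) (T s)) *\<^sub>R cross3 (n s) (T s)"
      by (rule decomp3[OF nn TT nT NST])
    moreover have "inner (unit_normal Y (\<beta> s)) (n s) = c" using ang[of s] by (simp add: n_def inner_commute)
    ultimately show ?thesis by (simp add: \<sigma>_def \<nu>_def)
  qed
  have sq: "(\<sigma> s)\<^sup>2 = 1 - c\<^sup>2" for s
  proof -
    have "1 = inner (c *\<^sub>R n s + \<sigma> s *\<^sub>R \<nu> s) (c *\<^sub>R n s + \<sigma> s *\<^sub>R \<nu> s)" using NSn[of s] dec[of s] by simp
    also have "\<dots> = c\<^sup>2 + (\<sigma> s)\<^sup>2"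
      using nn[of s] \<nu>\<nu>[of s] \<nu>n[of s]
      by (simp add: inner_add_left inner_add_right inner_commute power2_eq_square)
    finally show ?thesis by simp
  qed
  have \<sigma>cont: "continuous_on UNIV \<sigma>"
  proof (rule continuous_at_imp_continuous_on, intro ballI)
    fix s :: real
    have c1: "isCont (\<lambda>s. unit_normal Y (\<beta> s)) s"
    proof -
      have "isCont (unit_normal Y) (\<beta> s)"
        using differentiable_imp_continuous_within[OF imm_normal_diff(1)[OF S lift(2)[rule_format]]] .
      then show ?thesis by (rule isCont_o2[OF bcont])
    qed
    have c2: "isCont \<nu> s"
    proof -
      have "\<nu> = (\<lambda>s. cross3 (unit_normal X (cis s)) ((1 / norm (pd (\<i> * cis s) X (cis s))) *\<^sub>R pd (\<i> * cis s) X (cis s)))"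
        by (simp add: fun_eq_iff \<nu>_def n_def T_def Tg_def)
      then show ?thesis using differentiable_imp_continuous_within[OF frame_diff[OF confX circ, of s]] by simp
    qed
    show "isCont \<sigma> s" unfolding \<sigma>_def[abs_def] by (rule continuous_inner[OF c1 c2])
  qed
  have \<sigma>c: "\<sigma> s = \<sigma> 0" for s by (rule sigma_const[OF \<sigma>cont sq])
  have cs: "c\<^sup>2 + (\<sigma> 0)\<^sup>2 = 1" using sq[of 0] by simp
  have tau: "geodesic_torsion (\<lambda>t. X (cis t)) (\<lambda>t. unit_normal Y (\<beta> t)) t
      = Im ((cis t)\<^sup>2 * hopf X (cis t)) / (2 * fE X (cis t))" for t
  proof (rule torsion_formula[OF confX circ _ cs])
    fix s show "unit_normal Y (\<beta> s) = c *\<^sub>R unit_normal X (cis s) + \<sigma> 0 *\<^sub>R cross3 (unit_normal X (cis s))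
              ((1 / norm (pd (\<i> * cis s) X (cis s))) *\<^sub>R pd (\<i> * cis s) X (cis s))"
      using dec[of s] \<sigma>c[of s] by (simp add: n_def \<nu>_def T_def Tg_def)
  qed
  have circ1: "cis t \<in> cball 0 1" for t by (simp add: dist_norm)
  have fwd: "\<forall>t. geodesic_torsion (\<lambda>t. X (cis t)) (\<lambda>t. unit_normal Y (\<beta> t)) t = 0"
    if u: "\<forall>z\<in>cball 0 1. umbilic X z"
  proof
    fix t
    have "hopf X (cis t) = 0" using umbilic_hopf_zero[OF confX circ] u circ1 by blast
    then show "geodesic_torsion (\<lambda>t. X (cis t)) (\<lambda>t. unit_normal Y (\<beta> t)) t = 0" by (simp add: tau)
  qed
  have bwd: "\<forall>z\<in>cball 0 1. umbilic X z"
    if tc: "\<forall>t. geodesic_torsion (\<lambda>t. X (cis t)) (\<lambda>t. unit_normal Y (\<beta> t)) t = c0" for c0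
  proof -
    define \<Psi> where "\<Psi> z = z\<^sup>2 * hopf X z" for z
    have hh: "hopf X holomorphic_on U" by (rule hopf_holo[OF confX H])
    have hPsi: "\<Psi> holomorphic_on U" unfolding \<Psi>_def[abs_def] using hh by (intro holomorphic_intros)
    have Psi0: "\<Psi> 0 = 0" by (simp add: \<Psi>_def)
    have hball: "\<Psi> holomorphic_on ball 0 1" using hPsi disc ball_subset_cball holomorphic_on_subset by blast
    have cPsi: "continuous_on (cball 0 1) \<Psi>"
      using holomorphic_on_imp_continuous_on[OF hPsi] disc continuous_on_subset by blast
    have Ecs: "continuous_on (sphere 0 1) (fE X)"
    proof -
      have "fE X = (\<lambda>w. inner (pd 1 X w) (pd 1 X w))" by (simp add: fun_eq_iff fE_def)
      moreover have "continuous_on U (\<lambda>w. inner (pd 1 X w) (pd 1 X w))"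
        using cinf_diff[OF cinf_pd[OF sm]]
        by (intro continuous_at_imp_continuous_on ballI continuous_inner differentiable_imp_continuous_within) auto
      ultimately show ?thesis using disc sphere_cball continuous_on_subset by (metis subset_trans)
    qed
    have onsph: "Im (\<Psi> z) = 2 * fE X z * c0" if z: "z \<in> sphere 0 1" for z
    proof -
      have "z \<noteq> 0" "norm z = 1" using z by auto
      then have zc: "cis (Arg z) = z" using cis_Arg by (simp add: sgn_div_norm)
      have E: "fE X z > 0" using pf(3)[of "Arg z"] zc by simp
      have "c0 = Im ((cis (Arg z))\<^sup>2 * hopf X (cis (Arg z))) / (2 * fE X (cis (Arg z)))"
        using tc tau by metis
      then show ?thesis using E zc by (simp add: \<Psi>_def field_simps)
    qed
    have mr: "Re (f \<xi>) \<le> B" if "f holomorphic_on ball 0 1" "continuous_on (cball 0 1) f"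
      "\<And>z. z \<in> sphere 0 1 \<Longrightarrow> Re (f z) \<le> B" "\<xi> \<in> cball 0 1" for f :: "complex \<Rightarrow> complex" and B \<xi>
      using maximum_real_frontier[of f "cball 0 1" B \<xi>] that by simp
    have hi: "(\<lambda>z. k * \<Psi> z) holomorphic_on ball 0 1" for k using hball by (intro holomorphic_intros)
    have ci: "continuous_on (cball 0 1) (\<lambda>z. k * \<Psi> z)" for k using cPsi by (intro continuous_intros)
    have c00: "c0 = 0"
    proof (rule ccontr)
      assume "c0 \<noteq> 0"
      obtain z0 where z0: "z0 \<in> sphere 0 1" "\<And>y. y \<in> sphere 0 1 \<Longrightarrow> fE X z0 \<le> fE X y"
      proof -
        have ne: "sphere (0::complex) 1 \<noteq> {}" using circ1[of 0] by (auto simp: dist_norm)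
        show ?thesis using continuous_attains_inf[OF compact_sphere ne Ecs] that by blast
      qed
      have m: "fE X z0 > 0"
      proof -
        have "z0 \<noteq> 0" "norm z0 = 1" using z0(1) by auto
        then have zc: "cis (Arg z0) = z0" using cis_Arg by (simp add: sgn_div_norm)
        show ?thesis using pf(3)[of "Arg z0"] zc by simp
      qed
      show False
      proof (cases "c0 > 0")
        case True
        have "Re (\<i> * \<Psi> 0) \<le> - 2 * fE X z0 * c0"
        proof (rule mr[OF hi ci])
          fix z :: complex assume z: "z \<in> sphere 0 1"
          have "fE X z0 * c0 \<le> fE X z * c0" using z0(2)[OF z] True by (simp add: mult_right_mono)
          then show "Re (\<i> * \<Psi> z) \<le> - 2 * fE X z0 * c0" using onsph[OF z] by simp
        qed simp
        then have "c0 * fE X z0 \<le> 0" using Psi0 by simp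
        moreover have "c0 * fE X z0 > 0" using m True by simp
        ultimately show False by linarith
      next
        case False
        then have neg: "c0 < 0" using \<open>c0 \<noteq> 0\<close> by simp
        have "Re (- \<i> * \<Psi> 0) \<le> 2 * fE X z0 * c0"
        proof (rule mr[OF hi ci])
          fix z :: complex assume z: "z \<in> sphere 0 1"
          have "fE X z * c0 \<le> fE X z0 * c0" using z0(2)[OF z] neg by (simp add: mult_right_mono_neg)
          then show "Re (- \<i> * \<Psi> z) \<le> 2 * fE X z0 * c0" using onsph[OF z] by simp
        qed simp
        then have "0 \<le> c0 * fE X z0" using Psi0 by simp
        moreover have "c0 * fE X z0 < 0" using m neg by (simp add: mult_neg_pos)
        ultimately show False by linarith
      qed
    qed
    have imz: "Im (\<Psi> z) = 0" if z: "z \<in> cball 0 1" for z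
    proof -
      have "Re (\<i> * \<Psi> z) \<le> 0" by (rule mr[OF hi ci _ z]) (simp add: onsph c00)
      moreover have "Re (- \<i> * \<Psi> z) \<le> 0" by (rule mr[OF hi ci _ z]) (simp add: onsph c00)
      ultimately show ?thesis by simp
    qed
    have Pball: "\<Psi> z = 0" if z: "z \<in> ball 0 1" for z
      using holo_real_const[OF hball _ z] imz Psi0 by auto
    have hball0: "hopf X z = 0" if z: "z \<in> ball 0 1" "z \<noteq> 0" for z
      using Pball[OF z(1)] z(2) by (simp add: \<Psi>_def)
    have h0: "hopf X 0 = 0"
    proof -
      have "(0::complex) \<in> U" using disc by auto
      then have "isCont (hopf X) 0"
        using holomorphic_on_imp_continuous_on[OF hh] continuous_on_eq_continuous_at[OF oU] by blast
      then have l1: "(hopf X \<longlongrightarrow> hopf X 0) (at 0)" by (simp add: isCont_def)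
      have "eventually (\<lambda>x. hopf X x = 0) (at 0)"
        unfolding eventually_at by (intro exI[of _ 1]) (auto intro!: hball0 simp: dist_norm)
      then have l2: "(hopf X \<longlongrightarrow> 0) (at 0)" by (rule tendsto_eventually)
      show ?thesis using tendsto_unique[OF at_neq_bot l1 l2] .
    qed
    have hb: "hopf X z = 0" if "z \<in> ball 0 1" for z using hball0 h0 that by (cases "z = 0") auto
    have hc: "hopf X z = 0" if z: "z \<in> cball 0 1" for z
    proof (rule continuous_constant_on_closure[where S="ball (0::complex) 1" and f="hopf X" and a=0 and x=z])
      show "continuous_on (closure (ball (0::complex) 1)) (hopf X)"
        using holomorphic_on_imp_continuous_on[OF hh] disc continuous_on_subset by simp
      show "z \<in> closure (ball (0::complex) 1)" using z by simp
    qed (rule hb)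
    show ?thesis using hopf_zero_umbilic[OF confX] hc disc by blast
  qed
  show ?thesis using fwd bwd by blast
qed

end
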